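(* Let $K$ be a field, $\Lambda=(KQ/\langle I\rangle,|\cdot|)$ a graded pinched gentle algebra, $(\alpha,\beta)$ an acyclic graded Kronecker of $\Lambda$ with source $1$ and target $2$, $\mu\in K^*$, and $B=(P_2[|\alpha|]\oplus P_1[1],\partial=\begin{pmatrix}0&\alpha+\mu\beta\\0&0\end{pmatrix})\in\mathcal{P}(\Lambda)^{pre-tr}$. Let $\mathcal{A}$ be the full DG subcategory of $\mathcal{P}(\Lambda)^{pre-tr}$ on $Q_0\cup\{B\}$. Then for all $i\in Q_0\setminus\{1,2\}$, $H^*\mathrm{Hom}_{\mathcal{A}}(P_i,B)\simeq0\simeq H^*\mathrm{Hom}_{\mathcal{A}}(B,P_i)$.
   Context: Paths in $Q$ are composed right to left; $e_a$ trivial path, $P_a=e_a\Lambda$. Graded pinched gentle: $Q_1=Q_1^g\sqcup Q_1^p$, $I=I^g\sqcup I^p$, $(Q^g,\langle I^g\rangle)$ gentle (each vertex at most two incoming/outgoing arrows; $I^g$ paths of length two with, for each arrow $\alpha$, at most one arrow $\beta$ with $\alpha\beta$ a path in $I^g$, at most one $\gamma$ with $\gamma\alpha$ in $I^g$, at most one $\beta'$ with $\alpha\beta'$ a path not in $I^g$, at most one $\gamma'$ with $\gamma'\alpha$ not in $I^g$), $Q_1^p$ degree-zero loops at distinct vertices, and for each $v$ with loop $\gamma_v$, arrows $\alpha_v^\pm,\beta_v^\pm$ of $Q^g$ at $v$ with $\beta_v^+\alpha_v^-,\alpha_v^+\beta_v^-\in I^g$ give $I^p=\{\beta_v^+(\gamma_v+e_v),(\gamma_v+e_v)\beta_v^-,\alpha_v^+(\gamma_v-e_v),(\gamma_v-e_v)\alpha_v^-\}$.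 Graded Kronecker: arrows $\alpha,\beta$ of $Q^g$, not loops, common source $1$, common target $2$, $|\alpha|=|\beta|$, no loop of $Q_1^p$ at $1$ or $2$; acyclic: $\alpha,\beta$ not on an oriented cycle of $(Q^g,I^g)$. $\mathcal{P}(\Lambda)$ is the DG category with objects $Q_0$ (vertex $i$ written $P_i$), $\mathrm{Hom}(i,j)=e_j\Lambda e_i$ graded, zero differential. $\mathcal{P}(\Lambda)^{pre-tr}$ (one-sided twisted complexes): objects $(\bigoplus_iC_i[r_i],\partial)$ with $\partial$ strictly upper triangular, entries $\partial_{ij}\in\mathrm{Hom}(C_j,C_i)$ of degree $r_i-r_j+1$, $d_{naive}\partial+\partial^2=0$; morphisms are matrices of morphisms, an entry $b:C_l\to C'_k$ having degree $|b|+r_l-r'_k$; composition by matrix multiplication; $df=d_{naive}f+\partial'f-(-1)^lf\partial$ for $f$ of degree $l$. Each $P_i$ is the twisted complex $(P_i[0],0)$. *)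

theory Defs
  imports Main
begin

record ('v,'a) quiver =
  verts :: "'v set"
  arrs :: "'a set"
  src :: "'a \<Rightarrow> 'v"
  tgt :: "'a \<Rightarrow> 'v"

text \<open>A path is a pair (start vertex, list of arrows).  Paths are composed right to left:
  the list [a1, ..., an] denotes the path a1 a2 ... an, i.e. an is traversed first.
  The trivial path e_v is (v, []).\<close>
type_synonym ('v,'a) path = "'v \<times> 'a list"

definition arrow_chain :: "('v,'a) quiver \<Rightarrow> 'a list \<Rightarrow> bool" where
  "arrow_chain Q xs \<longleftrightarrow> (\<forall>k. Suc k < length xs \<longrightarrow> src Q (xs ! k) = tgt Q (xs ! Suc k))"

definition is_path :: "('v,'a) quiver \<Rightarrow> 'a set \<Rightarrow> ('v,'a) path \<Rightarrow> bool" where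
  "is_path Q A p \<longleftrightarrow> fst p \<in> verts Q \<and> set (snd p) \<subseteq> A \<and> arrow_chain Q (snd p)
     \<and> (snd p \<noteq> [] \<longrightarrow> src Q (last (snd p)) = fst p)"

definition ptgt :: "('v,'a) quiver \<Rightarrow> ('v,'a) path \<Rightarrow> 'v" where
  "ptgt Q p = (if snd p = [] then fst p else tgt Q (hd (snd p)))"

text \<open>p q = "first q, then p"\<close>
definition pcomp :: "('v,'a) path \<Rightarrow> ('v,'a) path \<Rightarrow> ('v,'a) path" where
  "pcomp p q = (fst q, snd p @ snd q)"

definition composable :: "('v,'a) quiver \<Rightarrow> ('v,'a) path \<Rightarrow> ('v,'a) path \<Rightarrow> bool" where
  "composable Q p q \<longleftrightarrow> fst p = ptgt Q q"

definition pdeg :: "('a \<Rightarrow> int) \<Rightarrow> ('v,'a) path \<Rightarrow> int" where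
  "pdeg deg p = sum_list (map deg (snd p))"

type_synonym ('v,'a,'k) kq = "('v,'a) path \<Rightarrow> 'k"

definition supp :: "('v,'a,'k::zero) kq \<Rightarrow> ('v,'a) path set" where
  "supp f = {p. f p \<noteq> 0}"

definition kzero :: "('v,'a,'k::zero) kq" where
  "kzero = (\<lambda>_. 0)"

definition delta :: "('v,'a) path \<Rightarrow> ('v,'a,'k::{zero,one}) kq" where
  "delta p = (\<lambda>r. if r = p then 1 else 0)"

definition kadd :: "('v,'a,'k::plus) kq \<Rightarrow> ('v,'a,'k) kq \<Rightarrow> ('v,'a,'k) kq" where
  "kadd f g = (\<lambda>r. f r + g r)"

definition ksub :: "('v,'a,'k::minus) kq \<Rightarrow> ('v,'a,'k) kq \<Rightarrow> ('v,'a,'k) kq" where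
  "ksub f g = (\<lambda>r. f r - g r)"

definition ksmult :: "'k::times \<Rightarrow> ('v,'a,'k) kq \<Rightarrow> ('v,'a,'k) kq" where
  "ksmult c f = (\<lambda>r. c * f r)"

definition kmul :: "('v,'a) quiver \<Rightarrow> ('v,'a,'k::field) kq \<Rightarrow> ('v,'a,'k) kq \<Rightarrow> ('v,'a,'k) kq" where
  "kmul Q f g = (\<lambda>r. \<Sum>pq \<in> {(p,q). p \<in> supp f \<and> q \<in> supp g \<and> composable Q p q \<and> pcomp p q = r}.
                        f (fst pq) * g (snd pq))"

inductive_set ideal_gen :: "('v,'a) quiver \<Rightarrow> ('v,'a,'k::field) kq set \<Rightarrow> ('v,'a,'k) kq set"
  for Q R where
  ig_zero: "kzero \<in> ideal_gen Q R"
| ig_gen: "x \<in> R \<Longrightarrow> x \<in> ideal_gen Q R"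
| ig_add: "x \<in> ideal_gen Q R \<Longrightarrow> y \<in> ideal_gen Q R \<Longrightarrow> kadd x y \<in> ideal_gen Q R"
| ig_smult: "x \<in> ideal_gen Q R \<Longrightarrow> ksmult c x \<in> ideal_gen Q R"
| ig_left: "x \<in> ideal_gen Q R \<Longrightarrow> is_path Q (arrs Q) p \<Longrightarrow> kmul Q (delta p) x \<in> ideal_gen Q R"
| ig_right: "x \<in> ideal_gen Q R \<Longrightarrow> is_path Q (arrs Q) p \<Longrightarrow> kmul Q x (delta p) \<in> ideal_gen Q R"

definition gentle :: "('v,'a) quiver \<Rightarrow> 'a set \<Rightarrow> ('v,'a) path set \<Rightarrow> bool" where
  "gentle Q Q1g Ig \<longleftrightarrow>
     (\<forall>v \<in> verts Q. card {a \<in> Q1g. tgt Q a = v} \<le> 2 \<and> card {a \<in> Q1g. src Q a = v} \<le> 2)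
   \<and> (\<forall>p \<in> Ig. is_path Q Q1g p \<and> length (snd p) = 2)
   \<and> (\<forall>a \<in> Q1g.
        card {b \<in> Q1g. src Q a = tgt Q b \<and> (src Q b, [a, b]) \<in> Ig} \<le> 1
      \<and> card {c \<in> Q1g. src Q c = tgt Q a \<and> (src Q a, [c, a]) \<in> Ig} \<le> 1
      \<and> card {b \<in> Q1g. src Q a = tgt Q b \<and> (src Q b, [a, b]) \<notin> Ig} \<le> 1
      \<and> card {c \<in> Q1g. src Q c = tgt Q a \<and> (src Q a, [c, a]) \<notin> Ig} \<le> 1)"

text \<open>For a pinched loop g at v = src g the data ap g, am g, bp g, bm g are the arrows
  alpha_v^+, alpha_v^-, beta_v^+, beta_v^- (plus = outgoing, minus = incoming).\<close>
definition pinched_data ::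
  "('v,'a) quiver \<Rightarrow> 'a set \<Rightarrow> ('v,'a) path set \<Rightarrow> 'a \<Rightarrow> 'a \<Rightarrow> 'a \<Rightarrow> 'a \<Rightarrow> 'a \<Rightarrow> bool" where
  "pinched_data Q Q1g Ig g ap am bp bm \<longleftrightarrow>
     ap \<in> Q1g \<and> am \<in> Q1g \<and> bp \<in> Q1g \<and> bm \<in> Q1g
   \<and> src Q ap = src Q g \<and> src Q bp = src Q g \<and> tgt Q am = src Q g \<and> tgt Q bm = src Q g
   \<and> (src Q am, [bp, am]) \<in> Ig \<and> (src Q bm, [ap, bm]) \<in> Ig"

definition graded_pinched_gentle ::
  "('v,'a) quiver \<Rightarrow> 'a set \<Rightarrow> 'a set \<Rightarrow> ('v,'a) path set \<Rightarrow> ('a \<Rightarrow> int)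
   \<Rightarrow> ('a \<Rightarrow> 'a) \<Rightarrow> ('a \<Rightarrow> 'a) \<Rightarrow> ('a \<Rightarrow> 'a) \<Rightarrow> ('a \<Rightarrow> 'a) \<Rightarrow> bool" where
  "graded_pinched_gentle Q Q1g Q1p Ig deg ap am bp bm \<longleftrightarrow>
     finite (verts Q) \<and> finite (arrs Q)
   \<and> (\<forall>a \<in> arrs Q. src Q a \<in> verts Q \<and> tgt Q a \<in> verts Q)
   \<and> Q1g \<inter> Q1p = {} \<and> Q1g \<union> Q1p = arrs Q
   \<and> gentle Q Q1g Ig
   \<and> (\<forall>g \<in> Q1p. src Q g = tgt Q g \<and> deg g = 0)
   \<and> inj_on (src Q) Q1p
   \<and> (\<forall>g \<in> Q1p. pinched_data Q Q1g Ig g (ap g) (am g) (bp g) (bm g))"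

definition pinched_rels ::
  "('v,'a) quiver \<Rightarrow> 'a set \<Rightarrow> ('v,'a) path set
   \<Rightarrow> ('a \<Rightarrow> 'a) \<Rightarrow> ('a \<Rightarrow> 'a) \<Rightarrow> ('a \<Rightarrow> 'a) \<Rightarrow> ('a \<Rightarrow> 'a) \<Rightarrow> ('v,'a,'k::field) kq set" where
  "pinched_rels Q Q1p Ig ap am bp bm =
     delta ` Ig \<union>
     (\<Union>g \<in> Q1p. let v = src Q g in
        { kadd (delta (v, [bp g, g])) (delta (v, [bp g])),
          kadd (delta (src Q (bm g), [g, bm g])) (delta (src Q (bm g), [bm g])),
          ksub (delta (v, [ap g, g])) (delta (v, [ap g])),
          ksub (delta (src Q (am g), [g, am g])) (delta (src Q (am g), [am g])) })"

definition Lambda_ideal ::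
  "('v,'a) quiver \<Rightarrow> 'a set \<Rightarrow> ('v,'a) path set
   \<Rightarrow> ('a \<Rightarrow> 'a) \<Rightarrow> ('a \<Rightarrow> 'a) \<Rightarrow> ('a \<Rightarrow> 'a) \<Rightarrow> ('a \<Rightarrow> 'a) \<Rightarrow> ('v,'a,'k::field) kq set" where
  "Lambda_ideal Q Q1p Ig ap am bp bm = ideal_gen Q (pinched_rels Q Q1p Ig ap am bp bm)"

definition bound_cycle :: "('v,'a) quiver \<Rightarrow> 'a set \<Rightarrow> ('v,'a) path set \<Rightarrow> ('v,'a) path \<Rightarrow> bool" where
  "bound_cycle Q Q1g Ig c \<longleftrightarrow> is_path Q Q1g c \<and> snd c \<noteq> [] \<and> ptgt Q c = fst c
     \<and> (\<forall>k. Suc k < length (snd c) \<longrightarrow>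
            (src Q (snd c ! Suc k), [snd c ! k, snd c ! Suc k]) \<notin> Ig)"

definition acyclic_graded_kronecker ::
  "('v,'a) quiver \<Rightarrow> 'a set \<Rightarrow> 'a set \<Rightarrow> ('v,'a) path set \<Rightarrow> ('a \<Rightarrow> int)
   \<Rightarrow> 'a \<Rightarrow> 'a \<Rightarrow> 'v \<Rightarrow> 'v \<Rightarrow> bool" where
  "acyclic_graded_kronecker Q Q1g Q1p Ig deg \<alpha> \<beta> v1 v2 \<longleftrightarrow>
     \<alpha> \<in> Q1g \<and> \<beta> \<in> Q1g \<and> \<alpha> \<noteq> \<beta>
   \<and> src Q \<alpha> \<noteq> tgt Q \<alpha> \<and> src Q \<beta> \<noteq> tgt Q \<beta>
   \<and> src Q \<alpha> = v1 \<and> src Q \<beta> = v1 \<and> tgt Q \<alpha> = v2 \<and> tgt Q \<beta> = v2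
   \<and> deg \<alpha> = deg \<beta>
   \<and> (\<forall>g \<in> Q1p. src Q g \<noteq> v1 \<and> src Q g \<noteq> v2)
   \<and> \<not> (\<exists>c. bound_cycle Q Q1g Ig c \<and> (\<alpha> \<in> set (snd c) \<or> \<beta> \<in> set (snd c)))"

text \<open>A twisted complex: list of summands (vertex i, shift r) meaning P_i[r], and the
  matrix of the differential (entries as representatives in KQ of elements of Lambda).\<close>
type_synonym ('v,'a,'k) twc = "('v \<times> int) list \<times> (nat \<Rightarrow> nat \<Rightarrow> ('v,'a,'k) kq)"

text \<open>f represents a homogeneous element of e_j Lambda e_i of degree n.\<close>
definition hom_elt :: "('v,'a) quiver \<Rightarrow> ('a \<Rightarrow> int) \<Rightarrow> 'v \<Rightarrow> 'v \<Rightarrow> int \<Rightarrow> ('v,'a,'k::field) kq \<Rightarrow> bool" where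
  "hom_elt Q deg i j n f \<longleftrightarrow> finite (supp f) \<and>
     (\<forall>p \<in> supp f. is_path Q (arrs Q) p \<and> fst p = i \<and> ptgt Q p = j \<and> pdeg deg p = n)"

text \<open>Morphisms X \<rightarrow> Y of degree n: entry (k,l) : C_l \<rightarrow> C'_k with |b| + r_l - r'_k = n.\<close>
definition is_mor :: "('v,'a) quiver \<Rightarrow> ('a \<Rightarrow> int) \<Rightarrow> int \<Rightarrow> ('v,'a,'k::field) twc \<Rightarrow> ('v,'a,'k) twc
   \<Rightarrow> (nat \<Rightarrow> nat \<Rightarrow> ('v,'a,'k) kq) \<Rightarrow> bool" where
  "is_mor Q deg n X Y f \<longleftrightarrow>
     (\<forall>k < length (fst Y). \<forall>l < length (fst X).
        hom_elt Q deg (fst (fst X ! l)) (fst (fst Y ! k)) (n - snd (fst X ! l) + snd (fst Y ! k)) (f k l))"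

text \<open>Equality of morphisms in Lambda (entrywise modulo the ideal J).\<close>
definition mor_eq :: "('v,'a,'k::field) kq set \<Rightarrow> ('v,'a,'k) twc \<Rightarrow> ('v,'a,'k) twc
   \<Rightarrow> (nat \<Rightarrow> nat \<Rightarrow> ('v,'a,'k) kq) \<Rightarrow> (nat \<Rightarrow> nat \<Rightarrow> ('v,'a,'k) kq) \<Rightarrow> bool" where
  "mor_eq J X Y f g \<longleftrightarrow>
     (\<forall>k < length (fst Y). \<forall>l < length (fst X). ksub (f k l) (g k l) \<in> J)"

text \<open>Differential d f = d_naive f + \<partial>' f - (-1)^n f \<partial>; here d_naive = 0 since
  Lambda has zero differential.\<close>
definition dmor :: "('v,'a) quiver \<Rightarrow> int \<Rightarrow> ('v,'a,'k::field) twc \<Rightarrow> ('v,'a,'k) twc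
   \<Rightarrow> (nat \<Rightarrow> nat \<Rightarrow> ('v,'a,'k) kq) \<Rightarrow> (nat \<Rightarrow> nat \<Rightarrow> ('v,'a,'k) kq)" where
  "dmor Q n X Y f = (\<lambda>k l r.
      (\<Sum>m < length (fst Y). kmul Q (snd Y k m) (f m l) r)
      - (-1) ^ nat \<bar>n\<bar> * (\<Sum>m < length (fst X). kmul Q (f k m) (snd X m l) r))"

text \<open>H^* Hom(X,Y) = 0: in every degree, every cocycle is a coboundary.\<close>
definition hom_acyclic :: "('v,'a) quiver \<Rightarrow> ('a \<Rightarrow> int) \<Rightarrow> ('v,'a,'k::field) kq set
   \<Rightarrow> ('v,'a,'k) twc \<Rightarrow> ('v,'a,'k) twc \<Rightarrow> bool" where
  "hom_acyclic Q deg J X Y \<longleftrightarrow>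
     (\<forall>n f. is_mor Q deg n X Y f \<and> mor_eq J X Y (dmor Q n X Y f) (\<lambda>_ _. kzero) \<longrightarrow>
        (\<exists>g. is_mor Q deg (n - 1) X Y g \<and> mor_eq J X Y (dmor Q (n - 1) X Y g) f))"

definition Pobj :: "'v \<Rightarrow> ('v,'a,'k::field) twc" where
  "Pobj i = ([(i, 0)], \<lambda>_ _. kzero)"

definition Bobj :: "('a \<Rightarrow> int) \<Rightarrow> 'a \<Rightarrow> 'a \<Rightarrow> 'k::field \<Rightarrow> 'v \<Rightarrow> 'v \<Rightarrow> ('v,'a,'k) twc" where
  "Bobj deg \<alpha> \<beta> \<mu> v1 v2 =
     ([(v2, deg \<alpha>), (v1, 1)],
      \<lambda>k l. if k = 0 \<and> l = 1 then kadd (delta (v1, [\<alpha>])) (ksmult \<mu> (delta (v1, [\<beta>]))) else kzero)"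

end

theory Submission
  imports Defs
begin

definition lq :: "('v,'a) path \<Rightarrow> ('v,'a) path \<Rightarrow> ('v,'a) path" where
  "lq p r = (fst r, drop (length (snd p)) (snd r))"
definition lcond :: "('v,'a) quiver \<Rightarrow> ('v,'a) path \<Rightarrow> ('v,'a) path \<Rightarrow> bool" where
  "lcond Q p r \<longleftrightarrow> snd r = snd p @ snd (lq p r) \<and> fst p = ptgt Q (lq p r)"
definition rp :: "('v,'a) quiver \<Rightarrow> ('v,'a) path \<Rightarrow> ('v,'a) path \<Rightarrow> ('v,'a) path" where
  "rp Q q r = (ptgt Q q, take (length (snd r) - length (snd q)) (snd r))"
definition rcond :: "('v,'a) path \<Rightarrow> ('v,'a) path \<Rightarrow> bool" where
  "rcond q r \<longleftrightarrow> fst r = fst q \<and> length (snd q) \<le> length (snd r)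
     \<and> drop (length (snd r) - length (snd q)) (snd r) = snd q"

lemma kmul_left_gen:
  assumes "finite S" "supp f \<subseteq> S"
  shows "kmul Q f h r = (\<Sum>p\<in>S. f p * (if lcond Q p r then h (lq p r) else 0))"
proof -
  let ?P = "{(p,q). p \<in> supp f \<and> q \<in> supp h \<and> composable Q p q \<and> pcomp p q = r}"
  let ?T = "{p \<in> supp f. lcond Q p r \<and> lq p r \<in> supp h}"
  have eq: "?P = (\<lambda>p. (p, lq p r)) ` ?T"
  proof (rule set_eqI, rule iffI)
    fix x assume "x \<in> ?P"
    then obtain p q where x: "x = (p,q)" "p \<in> supp f" "q \<in> supp h" "composable Q p q" "pcomp p q = r" by blast
    have "q = lq p r" using x(5) unfolding pcomp_def lq_def by (cases q, auto)
    moreover have "lcond Q p r" using x(4,5) calculation unfolding lcond_def composable_def pcomp_def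
      by (cases r) auto
    ultimately show "x \<in> (\<lambda>p. (p, lq p r)) ` ?T" using x by auto
  next
    fix x assume "x \<in> (\<lambda>p. (p, lq p r)) ` ?T"
    then obtain p where p: "x = (p, lq p r)" "p \<in> supp f" "lcond Q p r" "lq p r \<in> supp h" by blast
    have "pcomp p (lq p r) = r" using p(3) unfolding lcond_def pcomp_def
      by (cases r) (auto simp: lq_def)
    then show "x \<in> ?P" using p unfolding lcond_def composable_def by auto
  qed
  have "kmul Q f h r = (\<Sum>pq\<in>?P. f (fst pq) * h (snd pq))" by (simp add: kmul_def)
  also have "\<dots> = (\<Sum>p\<in>?T. f p * h (lq p r))"
    by (subst eq, subst sum.reindex) (auto simp: inj_on_def)
  also have "\<dots> = (\<Sum>p\<in>S. f p * (if lcond Q p r then h (lq p r) else 0))"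
    using assms by (intro sum.mono_neutral_cong_left) (auto simp: supp_def)
  finally show ?thesis .
qed

lemma kmul_right_gen:
  assumes "finite S" "supp g \<subseteq> S"
  shows "kmul Q h g r = (\<Sum>q\<in>S. (if rcond q r then h (rp Q q r) else 0) * g q)"
proof -
  let ?P = "{(p,q). p \<in> supp h \<and> q \<in> supp g \<and> composable Q p q \<and> pcomp p q = r}"
  let ?T = "{q \<in> supp g. rcond q r \<and> rp Q q r \<in> supp h}"
  have eq: "?P = (\<lambda>q. (rp Q q r, q)) ` ?T"
  proof (rule set_eqI, rule iffI)
    fix x assume "x \<in> ?P"
    then obtain p q where x: "x = (p,q)" "p \<in> supp h" "q \<in> supp g" "composable Q p q" "pcomp p q = r" by blast
    have "p = rp Q q r" using x(4,5) unfolding pcomp_def rp_def composable_def by (cases p, auto)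
    moreover have "rcond q r" using x(4,5) unfolding rcond_def composable_def pcomp_def
      by auto
    ultimately show "x \<in> (\<lambda>q. (rp Q q r, q)) ` ?T" using x by auto
  next
    fix x assume "x \<in> (\<lambda>q. (rp Q q r, q)) ` ?T"
    then obtain q where q: "x = (rp Q q r, q)" "q \<in> supp g" "rcond q r" "rp Q q r \<in> supp h" by blast
    have "pcomp (rp Q q r) q = r" using q(3) unfolding rcond_def pcomp_def rp_def
      by (cases r) (auto, metis append_take_drop_id)
    then show "x \<in> ?P" using q unfolding composable_def by (auto simp: rp_def)
  qed
  have "kmul Q h g r = (\<Sum>pq\<in>?P. h (fst pq) * g (snd pq))" by (simp add: kmul_def)
  also have "\<dots> = (\<Sum>q\<in>?T. h (rp Q q r) * g q)"
    by (subst eq, subst sum.reindex) (auto simp: inj_on_def)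
  also have "\<dots> = (\<Sum>q\<in>S. (if rcond q r then h (rp Q q r) else 0) * g q)"
    using assms by (intro sum.mono_neutral_cong_left) (auto simp: supp_def)
  finally show ?thesis .
qed

lemma supp_delta: "supp (delta p :: ('v,'a,'k::field) kq) = {p}"
  by (auto simp: supp_def delta_def)

lemma kmul_delta_left: "kmul Q (delta p) h r = (if lcond Q p r then h (lq p r) else (0::'k::field))"
  by (subst kmul_left_gen[of "{p}"]) (simp_all add: supp_delta, simp add: delta_def)

lemma kmul_delta_right: "kmul Q h (delta q) r = (if rcond q r then h (rp Q q r) else (0::'k::field))"
  by (subst kmul_right_gen[of "{q}"]) (simp_all add: supp_delta, simp add: delta_def)

definition restrT :: "'a set \<Rightarrow> ('v,'a,'k::zero) kq \<Rightarrow> ('v,'a,'k) kq" where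
  "restrT S y = (\<lambda>r. if snd r \<noteq> [] \<and> hd (snd r) \<in> S then y r else 0)"
definition restrB :: "'a set \<Rightarrow> ('v,'a,'k::zero) kq \<Rightarrow> ('v,'a,'k) kq" where
  "restrB S y = (\<lambda>r. if snd r \<noteq> [] \<and> last (snd r) \<in> S then y r else 0)"

locale setting =
  fixes Q :: "('v,'a) quiver" and Q1g Q1p :: "'a set" and Ig :: "('v,'a) path set"
    and deg :: "'a \<Rightarrow> int" and ap am bp bm :: "'a \<Rightarrow> 'a"
    and \<alpha> \<beta> :: 'a and v1 v2 :: 'v and \<mu> :: "'k::field"
  assumes gpg: "graded_pinched_gentle Q Q1g Q1p Ig deg ap am bp bm"
    and agk: "acyclic_graded_kronecker Q Q1g Q1p Ig deg \<alpha> \<beta> v1 v2"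
    and mu: "\<mu> \<noteq> 0"
begin

abbreviation "J \<equiv> (Lambda_ideal Q Q1p Ig ap am bp bm :: ('v,'a,'k) kq set)"

lemma fin_arrs: "finite (arrs Q)" using gpg by (simp add: graded_pinched_gentle_def)
lemma arr_verts: "a \<in> arrs Q \<Longrightarrow> src Q a \<in> verts Q \<and> tgt Q a \<in> verts Q"
  using gpg by (simp add: graded_pinched_gentle_def)
lemma disj: "Q1g \<inter> Q1p = {}" and un: "Q1g \<union> Q1p = arrs Q"
  using gpg by (simp_all add: graded_pinched_gentle_def)
lemma gent: "gentle Q Q1g Ig" using gpg by (simp add: graded_pinched_gentle_def)
lemma Ig_path: "p \<in> Ig \<Longrightarrow> is_path Q Q1g p \<and> length (snd p) = 2"
  using gent by (simp add: gentle_def)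
lemma pin: "g \<in> Q1p \<Longrightarrow> src Q g = tgt Q g \<and> pinched_data Q Q1g Ig g (ap g) (am g) (bp g) (bm g)"
  using gpg by (simp add: graded_pinched_gentle_def)
lemma pin2: "g \<in> Q1p \<Longrightarrow> src Q (ap g) = src Q g \<and> src Q (bp g) = src Q g
   \<and> tgt Q (am g) = src Q g \<and> tgt Q (bm g) = src Q g \<and> tgt Q g = src Q g"
  using pin by (simp add: pinched_data_def)
lemma kr: "\<alpha> \<in> Q1g" "\<beta> \<in> Q1g" "\<alpha> \<noteq> \<beta>" "src Q \<alpha> = v1" "src Q \<beta> = v1"
  "tgt Q \<alpha> = v2" "tgt Q \<beta> = v2" "deg \<alpha> = deg \<beta>" "v1 \<noteq> v2"
  using agk by (auto simp: acyclic_graded_kronecker_def)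
lemma kr_pin: "g \<in> Q1p \<Longrightarrow> src Q g \<noteq> v1 \<and> src Q g \<noteq> v2"
  using agk by (auto simp: acyclic_graded_kronecker_def)

lemma R_cases:
  assumes "x \<in> pinched_rels Q Q1p Ig ap am bp bm"
  shows "(\<exists>p\<in>Ig. x = delta p) \<or> (\<exists>g\<in>Q1p.
      x = kadd (delta (src Q g, [bp g, g])) (delta (src Q g, [bp g]))
    \<or> x = kadd (delta (src Q (bm g), [g, bm g])) (delta (src Q (bm g), [bm g]))
    \<or> x = ksub (delta (src Q g, [ap g, g])) (delta (src Q g, [ap g]))
    \<or> x = ksub (delta (src Q (am g), [g, am g])) (delta (src Q (am g), [am g])))"
  using assms unfolding pinched_rels_def Let_def by blast

definition small :: "'a list \<Rightarrow> bool" where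
  "small l \<longleftrightarrow> l = [] \<or> l = [\<alpha>] \<or> l = [\<beta>]"

lemma small_drop: "small l \<Longrightarrow> small (drop k l)"
  by (cases k) (auto simp: small_def)
lemma small_take: "small l \<Longrightarrow> small (take k l)"
  by (cases k) (auto simp: small_def)

lemma ab_not_pin: "g \<in> Q1p \<Longrightarrow> x \<in> {\<alpha>,\<beta>} \<Longrightarrow> x \<noteq> ap g \<and> x \<noteq> am g \<and> x \<noteq> bp g \<and> x \<noteq> bm g"
  using pin2[of g] kr kr_pin[of g] by auto

lemma J_small: "y \<in> J \<Longrightarrow> small l \<Longrightarrow> y (w, l) = 0"
  unfolding Lambda_ideal_def
proof (induction arbitrary: w l rule: ideal_gen.induct)
  case ig_zero
  then show ?case by (simp add: kzero_def)
next
  case (ig_gen x)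
  from R_cases[OF ig_gen(1)] show ?case
    apply (elim disjE bexE)
    subgoal for p using Ig_path[of p] ig_gen(2) by (auto simp: delta_def small_def)
    by (use ab_not_pin ig_gen(2) in \<open>fastforce simp: delta_def small_def kadd_def ksub_def\<close>)+
next
  case (ig_add x y)
  then show ?case by (simp add: kadd_def)
next
  case (ig_smult x c)
  then show ?case by (simp add: ksmult_def)
next
  case (ig_left x p)
  then show ?case by (simp add: kmul_delta_left lq_def small_drop)
next
  case (ig_right x p)
  then show ?case by (simp add: kmul_delta_right rp_def small_take)
qed


lemma J_triv: "y \<in> J \<Longrightarrow> y (w, []) = 0"
  using J_small small_def by blast
lemma J_a: "y \<in> J \<Longrightarrow> y (w, [\<alpha>]) = 0" and J_b: "y \<in> J \<Longrightarrow> y (w, [\<beta>]) = 0"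
  using J_small small_def by blast+

lemma J_gen: "x \<in> pinched_rels Q Q1p Ig ap am bp bm \<Longrightarrow> x \<in> J"
  unfolding Lambda_ideal_def by (rule ideal_gen.ig_gen)
lemma J_zero: "kzero \<in> J" unfolding Lambda_ideal_def by (rule ideal_gen.ig_zero)
lemma J_add: "x \<in> J \<Longrightarrow> y \<in> J \<Longrightarrow> kadd x y \<in> J" unfolding Lambda_ideal_def by (rule ideal_gen.ig_add)
lemma J_smult: "x \<in> J \<Longrightarrow> ksmult c x \<in> J" unfolding Lambda_ideal_def by (rule ideal_gen.ig_smult)
lemma J_left: "x \<in> J \<Longrightarrow> is_path Q (arrs Q) p \<Longrightarrow> kmul Q (delta p) x \<in> J"
  unfolding Lambda_ideal_def by (rule ideal_gen.ig_left)
lemma J_right: "x \<in> J \<Longrightarrow> is_path Q (arrs Q) p \<Longrightarrow> kmul Q x (delta p) \<in> J"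
  unfolding Lambda_ideal_def by (rule ideal_gen.ig_right)

lemma restrT_J:
  assumes S: "\<forall>g\<in>Q1p. g \<notin> S \<and> am g \<notin> S \<and> bm g \<notin> S" and y: "y \<in> J"
  shows "restrT S y \<in> J"
  using y unfolding Lambda_ideal_def
proof (induction rule: ideal_gen.induct)
  case ig_zero
  have "restrT S kzero = (kzero :: ('v,'a,'k) kq)" by (auto simp: restrT_def kzero_def)
  then show ?case by (simp add: ideal_gen.ig_zero)
next
  case (ig_gen x)
  have "restrT S x = x \<or> restrT S x = kzero"
    using R_cases[OF ig_gen(1)]
    apply (elim disjE bexE)
    subgoal for p
      apply (cases "snd p \<noteq> [] \<and> hd (snd p) \<in> S")
       apply (rule disjI1, rule ext, auto simp: restrT_def delta_def kzero_def)[1]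
      apply (rule disjI2, rule ext, auto simp: restrT_def delta_def kzero_def)
      done
    subgoal for g
      apply (cases "bp g \<in> S")
       apply (rule disjI1, rule ext, auto simp: restrT_def delta_def kzero_def kadd_def)[1]
      apply (rule disjI2, rule ext, auto simp: restrT_def delta_def kzero_def kadd_def)
      done
    subgoal for g using S by (intro disjI2 ext) (auto simp: restrT_def delta_def kzero_def kadd_def)
    subgoal for g
      apply (cases "ap g \<in> S")
       apply (rule disjI1, rule ext, auto simp: restrT_def delta_def kzero_def ksub_def)[1]
      apply (rule disjI2, rule ext, auto simp: restrT_def delta_def kzero_def ksub_def)
      done
    subgoal for g using S by (intro disjI2 ext) (auto simp: restrT_def delta_def kzero_def ksub_def)
    done
  then show ?case using ig_gen(1) by (auto intro: ideal_gen.intros)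
next
  case (ig_add x y)
  have "restrT S (kadd x y) = kadd (restrT S x) (restrT S y)" by (auto simp: restrT_def kadd_def)
  then show ?case using ig_add by (simp add: ideal_gen.ig_add)
next
  case (ig_smult x c)
  have "restrT S (ksmult c x) = ksmult c (restrT S x)" by (auto simp: restrT_def ksmult_def)
  then show ?case using ig_smult by (simp add: ideal_gen.ig_smult)
next
  case (ig_left x p)
  show ?case
  proof (cases "snd p = []")
    case True
    have "restrT S (kmul Q (delta p) x) = kmul Q (delta p) (restrT S x)"
      using True by (auto simp: restrT_def kmul_delta_left lcond_def lq_def)
    then show ?thesis using ig_left by (simp add: ideal_gen.ig_left)
  next
    case False
    have "restrT S (kmul Q (delta p) x) = (if hd (snd p) \<in> S then kmul Q (delta p) x else kzero)"
    proof
      fix r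
      show "restrT S (kmul Q (delta p) x) r = (if hd (snd p) \<in> S then kmul Q (delta p) x else kzero) r"
      proof (cases "lcond Q p r")
        case True
        then have "snd r \<noteq> [] \<and> hd (snd r) = hd (snd p)" using False by (simp add: lcond_def)
        then show ?thesis using True by (auto simp: restrT_def kmul_delta_left kzero_def)
      qed (auto simp: restrT_def kmul_delta_left kzero_def)
    qed
    then show ?thesis using ig_left by (simp add: ideal_gen.ig_left ideal_gen.ig_zero)
  qed
next
  case (ig_right x p)
  have x0: "x (w, []) = 0" for w using ig_right(1) J_triv unfolding Lambda_ideal_def by blast
  have "restrT S (kmul Q x (delta p)) = kmul Q (restrT S x) (delta p)"
  proof
    fix r
    show "restrT S (kmul Q x (delta p)) r = kmul Q (restrT S x) (delta p) r"
    proof (cases "rcond p r")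
      case True
      let ?k = "length (snd r) - length (snd p)"
      have sr: "snd r = take ?k (snd r) @ snd p" using True unfolding rcond_def
        by (metis append_take_drop_id)
      show ?thesis
      proof (cases "take ?k (snd r) = []")
        case True2: True
        then show ?thesis using True x0 by (auto simp: restrT_def kmul_delta_right rp_def)
      next
        case False
        then have "snd r \<noteq> [] \<and> hd (snd r) = hd (take ?k (snd r))" by (metis sr hd_append2 Nil_is_append_conv)
        then show ?thesis using True False by (auto simp: restrT_def kmul_delta_right rp_def)
      qed
    qed (auto simp: restrT_def kmul_delta_right)
  qed
  then show ?case using ig_right by (simp add: ideal_gen.ig_right)
qed

lemma restrB_J:
  assumes S: "\<forall>g\<in>Q1p. g \<notin> S \<and> ap g \<notin> S \<and> bp g \<notin> S" and y: "y \<in> J"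
  shows "restrB S y \<in> J"
  using y unfolding Lambda_ideal_def
proof (induction rule: ideal_gen.induct)
  case ig_zero
  have "restrB S kzero = (kzero :: ('v,'a,'k) kq)" by (auto simp: restrB_def kzero_def)
  then show ?case by (simp add: ideal_gen.ig_zero)
next
  case (ig_gen x)
  have "restrB S x = x \<or> restrB S x = kzero"
    using R_cases[OF ig_gen(1)]
    apply (elim disjE bexE)
    subgoal for p
      apply (cases "snd p \<noteq> [] \<and> last (snd p) \<in> S")
       apply (rule disjI1, rule ext, auto simp: restrB_def delta_def kzero_def)[1]
      apply (rule disjI2, rule ext, auto simp: restrB_def delta_def kzero_def)
      done
    subgoal for g using S by (intro disjI2 ext) (auto simp: restrB_def delta_def kzero_def kadd_def)
    subgoal for g
      apply (cases "bm g \<in> S")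
       apply (rule disjI1, rule ext, auto simp: restrB_def delta_def kzero_def kadd_def)[1]
      apply (rule disjI2, rule ext, auto simp: restrB_def delta_def kzero_def kadd_def)
      done
    subgoal for g using S by (intro disjI2 ext) (auto simp: restrB_def delta_def kzero_def ksub_def)
    subgoal for g
      apply (cases "am g \<in> S")
       apply (rule disjI1, rule ext, auto simp: restrB_def delta_def kzero_def ksub_def)[1]
      apply (rule disjI2, rule ext, auto simp: restrB_def delta_def kzero_def ksub_def)
      done
    done
  then show ?case using ig_gen(1) by (auto intro: ideal_gen.intros)
next
  case (ig_add x y)
  have "restrB S (kadd x y) = kadd (restrB S x) (restrB S y)" by (auto simp: restrB_def kadd_def)
  then show ?case using ig_add by (simp add: ideal_gen.ig_add)
next
  case (ig_smult x c)
  have "restrB S (ksmult c x) = ksmult c (restrB S x)" by (auto simp: restrB_def ksmult_def)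
  then show ?case using ig_smult by (simp add: ideal_gen.ig_smult)
next
  case (ig_right x p)
  show ?case
  proof (cases "snd p = []")
    case True
    have "restrB S (kmul Q x (delta p)) = kmul Q (restrB S x) (delta p)"
      using True by (auto simp: restrB_def kmul_delta_right rcond_def rp_def ptgt_def)
    then show ?thesis using ig_right by (simp add: ideal_gen.ig_right)
  next
    case False
    have "restrB S (kmul Q x (delta p)) = (if last (snd p) \<in> S then kmul Q x (delta p) else kzero)"
    proof
      fix r
      show "restrB S (kmul Q x (delta p)) r = (if last (snd p) \<in> S then kmul Q x (delta p) else kzero) r"
      proof (cases "rcond p r")
        case True
        then have "snd r = take (length (snd r) - length (snd p)) (snd r) @ snd p"
          unfolding rcond_def by (metis append_take_drop_id)
        then have "snd r \<noteq> [] \<and> last (snd r) = last (snd p)" using False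
          by (metis last_appendR Nil_is_append_conv)
        then show ?thesis using True by (auto simp: restrB_def kmul_delta_right kzero_def)
      qed (auto simp: restrB_def kmul_delta_right kzero_def)
    qed
    then show ?thesis using ig_right by (simp add: ideal_gen.ig_right ideal_gen.ig_zero)
  qed
next
  case (ig_left x p)
  have x0: "x (w, []) = 0" for w using ig_left(1) J_triv unfolding Lambda_ideal_def by blast
  have "restrB S (kmul Q (delta p) x) = kmul Q (delta p) (restrB S x)"
  proof
    fix r
    show "restrB S (kmul Q (delta p) x) r = kmul Q (delta p) (restrB S x) r"
    proof (cases "lcond Q p r")
      case True
      then have sr: "snd r = snd p @ snd (lq p r)" by (simp add: lcond_def)
      show ?thesis
      proof (cases "snd (lq p r) = []")
        case True2: True
        then have "lq p r = (fst r, [])" by (simp add: lq_def)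
        then show ?thesis using True x0 True2 by (auto simp: restrB_def kmul_delta_left)
      next
        case False
        then have "snd r \<noteq> [] \<and> last (snd r) = last (snd (lq p r))" by (metis sr last_appendR Nil_is_append_conv)
        then show ?thesis using True False by (auto simp: restrB_def kmul_delta_left)
      qed
    qed (auto simp: restrB_def kmul_delta_left)
  qed
  then show ?case using ig_left by (simp add: ideal_gen.ig_left)
qed

lemma card_le1_eq: "finite A \<Longrightarrow> card A \<le> 1 \<Longrightarrow> a \<in> A \<Longrightarrow> b \<in> A \<Longrightarrow> a = b"
  by (metis card_le_Suc0_iff_eq One_nat_def)

lemma into_v1_g: assumes "c \<in> arrs Q" "tgt Q c = v1" shows "c \<in> Q1g"
proof (rule ccontr)
  assume "c \<notin> Q1g"
  then have "c \<in> Q1p" using assms(1) un by blast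
  then have "tgt Q c = src Q c" "src Q c \<noteq> v1" using pin2 kr_pin by auto
  then show False using assms(2) by simp
qed
lemma from_v2_g: assumes "c \<in> arrs Q" "src Q c = v2" shows "c \<in> Q1g"
proof (rule ccontr)
  assume "c \<notin> Q1g"
  then have "c \<in> Q1p" using assms(1) un by blast
  then have "src Q c \<noteq> v2" using kr_pin by auto
  then show False using assms(2) by simp
qed

lemma Q1g_arrs: "Q1g \<subseteq> arrs Q" using un by blast
lemma fin_Q1g: "finite {x \<in> Q1g. P x}"
  by (rule finite_subset[OF _ fin_arrs]) (use Q1g_arrs in blast)

lemma gentleT:
  assumes c: "c \<in> Q1g" "tgt Q c = v1"
  shows "\<not> ((src Q c, [\<alpha>, c]) \<in> Ig \<and> (src Q c, [\<beta>, c]) \<in> Ig)"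
    and "(src Q c, [\<alpha>, c]) \<in> Ig \<or> (src Q c, [\<beta>, c]) \<in> Ig"
proof -
  have g1: "card {x \<in> Q1g. src Q x = tgt Q c \<and> (src Q c, [x, c]) \<in> Ig} \<le> 1"
   and g2: "card {x \<in> Q1g. src Q x = tgt Q c \<and> (src Q c, [x, c]) \<notin> Ig} \<le> 1"
    using gent c(1) unfolding gentle_def by blast+
  show "\<not> ((src Q c, [\<alpha>, c]) \<in> Ig \<and> (src Q c, [\<beta>, c]) \<in> Ig)"
  proof
    assume h: "(src Q c, [\<alpha>, c]) \<in> Ig \<and> (src Q c, [\<beta>, c]) \<in> Ig"
    have "\<alpha> = \<beta>" by (rule card_le1_eq[OF fin_Q1g g1]) (use h kr c in simp_all)
    then show False using kr by simp
  qed
  show "(src Q c, [\<alpha>, c]) \<in> Ig \<or> (src Q c, [\<beta>, c]) \<in> Ig"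
  proof (rule ccontr)
    assume h: "\<not> ((src Q c, [\<alpha>, c]) \<in> Ig \<or> (src Q c, [\<beta>, c]) \<in> Ig)"
    have "\<alpha> = \<beta>" by (rule card_le1_eq[OF fin_Q1g g2]) (use h kr c in simp_all)
    then show False using kr by simp
  qed
qed

lemma gentleB:
  assumes c: "c \<in> Q1g" "src Q c = v2"
  shows "\<not> ((v1, [c, \<alpha>]) \<in> Ig \<and> (v1, [c, \<beta>]) \<in> Ig)"
    and "(v1, [c, \<alpha>]) \<in> Ig \<or> (v1, [c, \<beta>]) \<in> Ig"
proof -
  have g1: "card {x \<in> Q1g. src Q c = tgt Q x \<and> (src Q x, [c, x]) \<in> Ig} \<le> 1"
   and g2: "card {x \<in> Q1g. src Q c = tgt Q x \<and> (src Q x, [c, x]) \<notin> Ig} \<le> 1"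
    using gent c(1) unfolding gentle_def by blast+
  show "\<not> ((v1, [c, \<alpha>]) \<in> Ig \<and> (v1, [c, \<beta>]) \<in> Ig)"
  proof
    assume h: "(v1, [c, \<alpha>]) \<in> Ig \<and> (v1, [c, \<beta>]) \<in> Ig"
    have "\<alpha> = \<beta>" by (rule card_le1_eq[OF fin_Q1g g1]) (use h kr c in simp_all)
    then show False using kr by simp
  qed
  show "(v1, [c, \<alpha>]) \<in> Ig \<or> (v1, [c, \<beta>]) \<in> Ig"
  proof (rule ccontr)
    assume h: "\<not> ((v1, [c, \<alpha>]) \<in> Ig \<or> (v1, [c, \<beta>]) \<in> Ig)"
    have "\<alpha> = \<beta>" by (rule card_le1_eq[OF fin_Q1g g2]) (use h kr c in simp_all)
    then show False using kr by simp
  qed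
qed

definition sig :: "'a \<Rightarrow> 'a" where
  "sig c = (if (src Q c, [\<alpha>, c]) \<in> Ig then \<beta> else \<alpha>)"
definition wt :: "'a \<Rightarrow> 'k" where
  "wt c = (if (src Q c, [\<alpha>, c]) \<in> Ig then inverse \<mu> else 1)"
definition stripT :: "('v,'a,'k) kq \<Rightarrow> ('v,'a,'k) kq" where
  "stripT y = (\<lambda>r. if snd r \<noteq> [] \<and> tgt Q (hd (snd r)) = v1
      then wt (hd (snd r)) * y (fst r, sig (hd (snd r)) # snd r) else 0)"

lemma sig_ab: "sig c = \<alpha> \<or> sig c = \<beta>" by (simp add: sig_def)
lemma tgt_sig: "tgt Q (sig c) = v2" using kr by (simp add: sig_def)

lemma sig_notI: assumes "tgt Q c = v1" shows "(src Q c, [sig c, c]) \<notin> Ig"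
proof
  assume a: "(src Q c, [sig c, c]) \<in> Ig"
  show False
  proof (cases "(src Q c, [\<alpha>, c]) \<in> Ig")
    case True
    then have "c \<in> Q1g" using Ig_path[OF True] by (auto simp: is_path_def)
    then show False using gentleT(1)[OF _ assms] True a by (simp add: sig_def)
  next
    case False
    then show False using a by (simp add: sig_def)
  qed
qed

lemma wt_sig: "sig c = a \<Longrightarrow> wt c = (if a = \<beta> then inverse \<mu> else 1)"
  using kr by (auto simp: sig_def wt_def)

lemma arrow_chain_tl: "arrow_chain Q (x # t) \<Longrightarrow> arrow_chain Q t"
  unfolding arrow_chain_def by (metis Suc_less_eq length_Cons nth_Cons_Suc)

lemma path_tl: "is_path Q A (w, x # t) \<Longrightarrow> is_path Q A (w, t)"
  unfolding is_path_def using arrow_chain_tl by (cases t) auto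

lemma stripT_J: "y \<in> J \<Longrightarrow> stripT y \<in> J"
  unfolding Lambda_ideal_def
proof (induction rule: ideal_gen.induct)
  case ig_zero
  have "stripT kzero = kzero" by (auto simp: stripT_def kzero_def)
  then show ?case by (simp add: ideal_gen.ig_zero)
next
  case (ig_gen x)
  have "stripT x = kzero"
  proof
    fix r
    show "stripT x r = kzero r"
    proof (cases "snd r \<noteq> [] \<and> tgt Q (hd (snd r)) = v1")
      case True
      then obtain c t where r: "snd r = c # t" and c: "tgt Q c = v1" by (cases "snd r") auto
      have "x (fst r, sig c # c # t) = 0"
        using R_cases[OF ig_gen(1)]
      proof (elim disjE bexE)
        fix p assume p: "p \<in> Ig" "x = delta p"
        show ?thesis
        proof (rule ccontr)
          assume "x (fst r, sig c # c # t) \<noteq> 0"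
          then have pe: "p = (fst r, sig c # c # t)" using p by (auto simp: delta_def split: if_splits)
          then have "t = []" "src Q c = fst r" using Ig_path[OF p(1)] by (auto simp: is_path_def)
          then show False using sig_notI[OF c] p(1) pe by simp
        qed
      next
        fix g assume g: "g \<in> Q1p"
        have "c \<noteq> g" "c \<noteq> bm g" "c \<noteq> am g" using pin2[OF g] kr_pin[OF g] c by auto
        then show "x = kadd (delta (src Q g, [bp g, g])) (delta (src Q g, [bp g])) \<Longrightarrow> ?thesis"
          "x = kadd (delta (src Q (bm g), [g, bm g])) (delta (src Q (bm g), [bm g])) \<Longrightarrow> ?thesis"
          "x = ksub (delta (src Q g, [ap g, g])) (delta (src Q g, [ap g])) \<Longrightarrow> ?thesis"
          "x = ksub (delta (src Q (am g), [g, am g])) (delta (src Q (am g), [am g])) \<Longrightarrow> ?thesis"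
          by (auto simp: delta_def kadd_def ksub_def)
      qed
      then show ?thesis using r by (simp add: stripT_def kzero_def)
    qed (auto simp: stripT_def kzero_def)
  qed
  then show ?case by (simp add: ideal_gen.ig_zero)
next
  case (ig_add x y)
  have "stripT (kadd x y) = kadd (stripT x) (stripT y)" by (auto simp: stripT_def kadd_def algebra_simps)
  then show ?case using ig_add by (simp add: ideal_gen.ig_add)
next
  case (ig_smult x c)
  have "stripT (ksmult c x) = ksmult c (stripT x)" by (auto simp: stripT_def ksmult_def algebra_simps)
  then show ?case using ig_smult by (simp add: ideal_gen.ig_smult)
next
  case (ig_left x p)
  show ?case
  proof (cases "snd p")
    case Nil
    have "stripT (kmul Q (delta p) x) = (if fst p = v2 then stripT x else kzero)"
      using Nil tgt_sig by (auto intro!: ext simp: stripT_def kmul_delta_left lcond_def lq_def ptgt_def kzero_def)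
    then show ?thesis using ig_left by (simp add: ideal_gen.ig_zero)
  next
    case (Cons a ps)
    show ?thesis
    proof (cases ps)
      case Nil
      let ?S = "{c. tgt Q c = v1 \<and> sig c = a \<and> fst p = v1}"
      have "stripT (kmul Q (delta p) x) = ksmult (if a = \<beta> then inverse \<mu> else 1) (restrT ?S x)"
      proof
        fix r
        show "stripT (kmul Q (delta p) x) r = ksmult (if a = \<beta> then inverse \<mu> else 1) (restrT ?S x) r"
        proof (cases "snd r \<noteq> [] \<and> tgt Q (hd (snd r)) = v1")
          case True
          then show ?thesis using Cons Nil wt_sig[of "hd (snd r)" a]
            by (auto simp: stripT_def kmul_delta_left lcond_def lq_def ptgt_def restrT_def ksmult_def)
        qed (auto simp: stripT_def restrT_def ksmult_def)
      qed
      moreover have "restrT ?S x \<in> ideal_gen Q (pinched_rels Q Q1p Ig ap am bp bm)"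
        using restrT_J[of ?S x] pin2 kr_pin ig_left(1) unfolding Lambda_ideal_def by force
      ultimately show ?thesis by (simp add: ideal_gen.ig_smult)
    next
      case (Cons b ps')
      let ?p' = "(fst p, b # ps')"
      have "stripT (kmul Q (delta p) x) = (if tgt Q b = v1 \<and> sig b = a then ksmult (wt b) (kmul Q (delta ?p') x) else kzero)"
      proof
        fix r
        show "stripT (kmul Q (delta p) x) r = (if tgt Q b = v1 \<and> sig b = a then ksmult (wt b) (kmul Q (delta ?p') x) else kzero) r"
        proof (cases "snd r")
          case Nil
          then show ?thesis by (auto simp: stripT_def kmul_delta_left lcond_def ksmult_def kzero_def)
        next
          case (Cons c t)
          have lqe: "lq p (fst r, sig c # c # t) = lq ?p' r"
            using \<open>snd p = a # ps\<close> \<open>ps = b # ps'\<close> Cons by (simp add: lq_def)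
          have lce: "lcond Q p (fst r, sig c # c # t) \<longleftrightarrow> sig c = a \<and> lcond Q ?p' r"
            using \<open>snd p = a # ps\<close> \<open>ps = b # ps'\<close> Cons lqe by (auto simp: lcond_def)
          have "lcond Q ?p' r \<Longrightarrow> c = b" using Cons by (simp add: lcond_def)
          then show ?thesis using Cons lqe lce
            by (auto simp: stripT_def kmul_delta_left ksmult_def kzero_def)
        qed
      qed
      moreover have "is_path Q (arrs Q) ?p'" using ig_left(2) \<open>snd p = a # ps\<close> Cons path_tl[of "arrs Q" "fst p" a "b # ps'"]
        by (cases p) auto
      ultimately show ?thesis using ig_left by (simp add: ideal_gen.ig_zero ideal_gen.ig_smult ideal_gen.ig_left)
    qed
  qed
next
  case (ig_right x p)
  have x0: "x (w, []) = 0" "x (w, [\<alpha>]) = 0" "x (w, [\<beta>]) = 0" for w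
    using ig_right(1) J_triv J_a J_b unfolding Lambda_ideal_def by blast+
  have "stripT (kmul Q x (delta p)) = kmul Q (stripT x) (delta p)"
  proof
    fix r
    show "stripT (kmul Q x (delta p)) r = kmul Q (stripT x) (delta p) r"
    proof (cases "snd r \<noteq> [] \<and> tgt Q (hd (snd r)) = v1")
      case False
      have "\<not> (rcond p r \<and> snd (rp Q p r) \<noteq> [] \<and> tgt Q (hd (snd (rp Q p r))) = v1)"
        using False by (auto simp: rcond_def rp_def)
      then show ?thesis using False by (auto simp: stripT_def kmul_delta_right)
    next
      case True
      then obtain c t where r: "snd r = c # t" and c: "tgt Q c = v1" by (cases "snd r") auto
      let ?s = "sig c"
      define n where "n = length t"
      define m where "m = length (snd p)"
      have "m \<le> n \<or> m = Suc n \<or> m > Suc n" by auto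
      then show ?thesis
      proof (elim disjE)
        assume mn: "m \<le> n"
        have d1: "drop (Suc (Suc n) - m) (?s # c # t) = drop (Suc n - m) (c # t)" using mn by (simp add: Suc_diff_le)
        have t1: "take (Suc (Suc n) - m) (?s # c # t) = ?s # take (Suc n - m) (c # t)" using mn by (simp add: Suc_diff_le)
        have hd1: "take (Suc n - m) (c # t) \<noteq> [] \<and> hd (take (Suc n - m) (c # t)) = c" using mn by (simp add: Suc_diff_le)
        show ?thesis using r c d1 t1 hd1 mn
          by (auto simp: stripT_def kmul_delta_right rcond_def rp_def m_def n_def Suc_diff_le)
      next
        assume mn: "m = Suc n"
        have "x (ptgt Q p, [?s]) = 0" using x0 sig_ab[of c] by auto
        then show ?thesis using r c mn
          by (auto simp: stripT_def kmul_delta_right rcond_def rp_def m_def n_def)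
      next
        assume mn: "m > Suc n"
        then show ?thesis using r c x0
          by (auto simp: stripT_def kmul_delta_right rcond_def rp_def m_def n_def)
      qed
    qed
  qed
  then show ?case using ig_right by (simp add: ideal_gen.ig_right)
qed

definition sigB :: "'a \<Rightarrow> 'a" where
  "sigB c = (if (v1, [c, \<alpha>]) \<in> Ig then \<beta> else \<alpha>)"
definition wtB :: "'a \<Rightarrow> 'k" where
  "wtB c = (if (v1, [c, \<alpha>]) \<in> Ig then inverse \<mu> else 1)"
definition stripB :: "('v,'a,'k) kq \<Rightarrow> ('v,'a,'k) kq" where
  "stripB y = (\<lambda>r. if snd r \<noteq> [] \<and> fst r = v2 \<and> src Q (last (snd r)) = v2
      then wtB (last (snd r)) * y (v1, snd r @ [sigB (last (snd r))]) else 0)"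

lemma sigB_ab: "sigB c = \<alpha> \<or> sigB c = \<beta>" by (simp add: sigB_def)

lemma sigB_notI: assumes "src Q c = v2" shows "(v1, [c, sigB c]) \<notin> Ig"
proof
  assume a: "(v1, [c, sigB c]) \<in> Ig"
  show False
  proof (cases "(v1, [c, \<alpha>]) \<in> Ig")
    case True
    then have "c \<in> Q1g" using Ig_path[OF True] by (auto simp: is_path_def)
    then show False using gentleB(1)[OF _ assms] True a by (simp add: sigB_def)
  next
    case False
    then show False using a by (simp add: sigB_def)
  qed
qed

lemma wtB_sig: "sigB c = a \<Longrightarrow> wtB c = (if a = \<beta> then inverse \<mu> else 1)"
  using kr by (auto simp: sigB_def wtB_def)

lemma arrow_chain_app: "arrow_chain Q (xs @ ys) \<Longrightarrow> arrow_chain Q xs"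
  unfolding arrow_chain_def by (metis Suc_lessD less_le_trans nat_less_le nth_append length_append le_add1)

lemma path_butlast: assumes "is_path Q (arrs Q) (w, l @ [b, a])" shows "is_path Q (arrs Q) (src Q b, l @ [b])"
proof -
  have sv: "src Q b \<in> verts Q" using assms arr_verts[of b] by (auto simp: is_path_def)
  have ch: "arrow_chain Q (l @ [b])" using assms arrow_chain_app[of "l @ [b]" "[a]"] by (simp add: is_path_def)
  show ?thesis using assms ch sv unfolding is_path_def by auto
qed

lemma stripB_J: "y \<in> J \<Longrightarrow> stripB y \<in> J"
  unfolding Lambda_ideal_def
proof (induction rule: ideal_gen.induct)
  case ig_zero
  have "stripB kzero = kzero" by (auto simp: stripB_def kzero_def)
  then show ?case by (simp add: ideal_gen.ig_zero)
next
  case (ig_gen x)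
  have "stripB x = kzero"
  proof
    fix r
    show "stripB x r = kzero r"
    proof (cases "snd r \<noteq> [] \<and> fst r = v2 \<and> src Q (last (snd r)) = v2")
      case True
      then obtain c t where r: "snd r = t @ [c]" and c: "src Q c = v2" by (cases "snd r" rule: rev_cases) auto
      have sne: "sigB c \<noteq> g \<and> sigB c \<noteq> am g \<and> sigB c \<noteq> bm g" if g: "g \<in> Q1p" for g
        using ab_not_pin[OF g, of "sigB c"] sigB_ab[of c] kr kr_pin[OF g] by auto
      have "x (v1, t @ [c, sigB c]) = 0"
        using R_cases[OF ig_gen(1)]
      proof (elim disjE bexE)
        fix p assume p: "p \<in> Ig" "x = delta p"
        show ?thesis
        proof (rule ccontr)
          assume "x (v1, t @ [c, sigB c]) \<noteq> 0"
          then have pe: "p = (v1, t @ [c, sigB c])" using p by (auto simp: delta_def split: if_splits)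
          then have "t = []" using Ig_path[OF p(1)] by auto
          then show False using sigB_notI[OF c] p(1) pe by simp
        qed
      next
        fix g assume g: "g \<in> Q1p"
        note sne[OF g]
        then show "x = kadd (delta (src Q g, [bp g, g])) (delta (src Q g, [bp g])) \<Longrightarrow> ?thesis"
          "x = kadd (delta (src Q (bm g), [g, bm g])) (delta (src Q (bm g), [bm g])) \<Longrightarrow> ?thesis"
          "x = ksub (delta (src Q g, [ap g, g])) (delta (src Q g, [ap g])) \<Longrightarrow> ?thesis"
          "x = ksub (delta (src Q (am g), [g, am g])) (delta (src Q (am g), [am g])) \<Longrightarrow> ?thesis"
          by (auto simp: delta_def kadd_def ksub_def)
      qed
      then show ?thesis using r by (simp add: stripB_def kzero_def)
    qed (auto simp: stripB_def kzero_def)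
  qed
  then show ?case by (simp add: ideal_gen.ig_zero)
next
  case (ig_add x y)
  have "stripB (kadd x y) = kadd (stripB x) (stripB y)" by (auto simp: stripB_def kadd_def algebra_simps)
  then show ?case using ig_add by (simp add: ideal_gen.ig_add)
next
  case (ig_smult x c)
  have "stripB (ksmult c x) = ksmult c (stripB x)" by (auto simp: stripB_def ksmult_def algebra_simps)
  then show ?case using ig_smult by (simp add: ideal_gen.ig_smult)
next
  case (ig_left x p)
  have x0: "x (w, []) = 0" "x (w, [\<alpha>]) = 0" "x (w, [\<beta>]) = 0" for w
    using ig_left(1) J_triv J_a J_b unfolding Lambda_ideal_def by blast+
  have "stripB (kmul Q (delta p) x) = kmul Q (delta p) (stripB x)"
  proof
    fix r
    show "stripB (kmul Q (delta p) x) r = kmul Q (delta p) (stripB x) r"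
    proof (cases "snd r \<noteq> [] \<and> fst r = v2 \<and> src Q (last (snd r)) = v2")
      case False
      have "\<not> (lcond Q p r \<and> snd (lq p r) \<noteq> [] \<and> fst (lq p r) = v2 \<and> src Q (last (snd (lq p r))) = v2)"
        using False by (auto simp: lcond_def lq_def)
      then show ?thesis using False by (auto simp: stripB_def kmul_delta_left)
    next
      case True
      define t where "t = snd r"
      define c where "c = last t"
      let ?s = "sigB c"
      define m where "m = length (snd p)"
      have "m < length t \<or> m \<ge> length t" by auto
      then show ?thesis
      proof (elim disjE)
        assume mn: "m < length t"
        have d1: "drop m (t @ [?s]) = drop m t @ [?s]" using mn by simp
        have ne: "drop m t \<noteq> []" "last (drop m t) = c" using mn by (auto simp: c_def)
        have pt: "ptgt Q (v1, drop m t @ [?s]) = ptgt Q (fst r, drop m t)" using ne by (simp add: ptgt_def)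
        show ?thesis using True d1 ne pt
          by (auto simp: stripB_def kmul_delta_left lcond_def lq_def m_def t_def c_def)
      next
        assume mn: "m \<ge> length t"
        have "drop m (t @ [?s]) = [] \<or> drop m (t @ [?s]) = [?s]" using mn
          by (cases "m = length t") auto
        then have "x (lq p (v1, t @ [?s])) = 0" using x0 sigB_ab[of c] by (auto simp: lq_def m_def)
        moreover have "snd (lq p r) = []" using mn by (simp add: lq_def m_def t_def)
        ultimately show ?thesis using True
          by (auto simp: stripB_def kmul_delta_left t_def c_def)
      qed
    qed
  qed
  then show ?case using ig_left by (simp add: ideal_gen.ig_left)
next
  case (ig_right x p)
  show ?case
  proof (cases "rev (snd p)")
    case Nil
    then have pn: "snd p = []" by simp
    have "stripB (kmul Q x (delta p)) = (if fst p = v1 then stripB x else kzero)"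
      using pn by (auto intro!: ext simp: stripB_def kmul_delta_right rcond_def rp_def ptgt_def kzero_def)
    then show ?thesis using ig_right by (simp add: ideal_gen.ig_zero)
  next
    case (Cons a qs)
    show ?thesis
    proof (cases qs)
      case Nil
      then have pa: "snd p = [a]" using Cons by (metis rev_singleton_conv)
      have v2v: "v2 \<in> verts Q" using arr_verts[of \<alpha>] kr Q1g_arrs by auto
      let ?S = "{c. src Q c = v2 \<and> sigB c = a \<and> fst p = v1}"
      let ?x2 = "kmul Q x (delta (v2, []))"
      have x2: "?x2 r = (if fst r = v2 then x r else 0)" for r
        by (cases r) (simp add: kmul_delta_right rcond_def rp_def ptgt_def)
      have "stripB (kmul Q x (delta p)) = ksmult (if a = \<beta> then inverse \<mu> else 1) (restrB ?S ?x2)"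
      proof
        fix r
        show "stripB (kmul Q x (delta p)) r = ksmult (if a = \<beta> then inverse \<mu> else 1) (restrB ?S ?x2) r"
        proof (cases "snd r \<noteq> [] \<and> fst r = v2 \<and> src Q (last (snd r)) = v2")
          case True
          have ta: "sigB (last (snd r)) = a \<Longrightarrow> tgt Q a = v2" using sigB_ab kr by metis
          show ?thesis using True pa wtB_sig[of "last (snd r)" a] x2[of r] ta
            by (auto simp: stripB_def kmul_delta_right rcond_def rp_def ptgt_def restrB_def ksmult_def)
        qed (auto simp: stripB_def restrB_def ksmult_def x2)
      qed
      moreover have "restrB ?S ?x2 \<in> ideal_gen Q (pinched_rels Q Q1p Ig ap am bp bm)"
        using restrB_J[of ?S ?x2] pin2 kr_pin ideal_gen.ig_right[OF ig_right(1), of "(v2, [])"] v2v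
        unfolding Lambda_ideal_def by (force simp: is_path_def arrow_chain_def)
      ultimately show ?thesis by (simp add: ideal_gen.ig_smult)
    next
      case (Cons b qs')
      have ps: "snd p = rev qs' @ [b, a]" using \<open>rev (snd p) = a # qs\<close> Cons
        by (metis append.assoc append_Cons append_Nil rev.simps(2) rev_rev_ident)
      let ?p' = "(src Q b, rev qs' @ [b])"
      let ?C = "fst p = v1 \<and> src Q b = v2 \<and> sigB b = a"
      have "stripB (kmul Q x (delta p)) = (if ?C then ksmult (wtB b) (kmul Q x (delta ?p')) else kzero)"
      proof
        fix r
        show "stripB (kmul Q x (delta p)) r = (if ?C then ksmult (wtB b) (kmul Q x (delta ?p')) else kzero) r"
        proof (cases "snd r \<noteq> [] \<and> fst r = v2 \<and> src Q (last (snd r)) = v2")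
          case False
          have "\<not> rcond ?p' r \<or> \<not> ?C"
          proof (rule ccontr)
            assume h: "\<not> (\<not> rcond ?p' r \<or> \<not> ?C)"
            let ?d = "drop (length (snd r) - length (snd ?p')) (snd r)"
            have d: "?d = rev qs' @ [b]" using h by (simp add: rcond_def)
            then have dn: "?d \<noteq> []" by simp
            then have "snd r \<noteq> []" by auto
            moreover have "last (snd r) = b"
            proof -
              have "length (snd r) - length (snd ?p') < length (snd r)" using dn by simp
              then have "last (snd r) = last ?d" by simp
              then show ?thesis using d by simp
            qed
            ultimately show False using False h by (simp add: rcond_def)
          qed
          then show ?thesis using False by (auto simp: stripB_def kmul_delta_right ksmult_def kzero_def)
        next
          case True
          define t where "t = snd r"
          define c where "c = last t"
          define N where "N = length t"
          define m where "m = length qs'"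
          have lp: "length (snd p) = Suc (Suc m)" using ps by (simp add: m_def)
          have lp': "length (snd ?p') = Suc m" by (simp add: m_def)
          have ptg: "ptgt Q p = ptgt Q ?p'" using ps by (cases "rev qs'") (auto simp: ptgt_def)
          show ?thesis
          proof (cases "Suc m \<le> N")
            case False
            have "\<not> rcond p (v1, t @ [sigB c])" using False lp by (auto simp: rcond_def N_def)
            moreover have "\<not> rcond ?p' r" using False lp' by (auto simp: rcond_def N_def t_def)
            ultimately show ?thesis using True
              by (auto simp: stripB_def kmul_delta_right ksmult_def kzero_def t_def c_def)
          next
            case le: True
            have k: "Suc N - length (snd p) = N - Suc m" using lp le by simp
            have dr: "drop (N - Suc m) (t @ [sigB c]) = drop (N - Suc m) t @ [sigB c]" using le by (simp add: N_def)
            have tk: "take (N - Suc m) (t @ [sigB c]) = take (N - Suc m) t" using le by (simp add: N_def)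
            have lr: "length (snd r) = N" by (simp add: N_def t_def)
            have "rcond p (v1, t @ [sigB c]) \<longleftrightarrow> v1 = fst p \<and> drop (N - Suc m) t @ [sigB c] = (rev qs' @ [b]) @ [a]"
              unfolding rcond_def using k dr ps le lp by (simp add: N_def)
            then have rc: "rcond p (v1, t @ [sigB c]) \<longleftrightarrow> fst p = v1 \<and> sigB c = a \<and> drop (N - Suc m) t = rev qs' @ [b]"
              by auto
            have rc': "rcond ?p' r \<longleftrightarrow> fst r = src Q b \<and> drop (N - Suc m) t = rev qs' @ [b]"
              using lr le lp' unfolding rcond_def by (simp add: t_def)
            have cb: "drop (N - Suc m) t = rev qs' @ [b] \<Longrightarrow> c = b"
            proof -
              assume d: "drop (N - Suc m) t = rev qs' @ [b]"
              have "N - Suc m < length t" using le by (simp add: N_def)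
              then have "last t = last (drop (N - Suc m) t)" by simp
              then show "c = b" using d by (simp add: c_def)
            qed
            have rpe: "rp Q p (v1, t @ [sigB c]) = rp Q ?p' r"
              unfolding rp_def using k tk ptg lp' lr by (simp add: t_def)
            have L: "stripB (kmul Q x (delta p)) r = wtB c * (if rcond p (v1, t @ [sigB c]) then x (rp Q p (v1, t @ [sigB c])) else 0)"
              using True by (simp add: stripB_def kmul_delta_right t_def c_def)
            have R: "(if ?C then ksmult (wtB b) (kmul Q x (delta ?p')) else kzero) r
               = (if ?C then wtB b * (if rcond ?p' r then x (rp Q ?p' r) else 0) else 0)"
              by (simp add: ksmult_def kzero_def kmul_delta_right)
            have fr: "fst r = v2" "src Q c = v2" using True by (simp_all add: t_def c_def)
            show ?thesis
            proof (cases "rcond p (v1, t @ [sigB c])")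
              case T: True
              then have "fst p = v1" "sigB c = a" "c = b" "rcond ?p' r" using rc rc' cb fr by auto
              then show ?thesis unfolding L R using T rpe fr by simp
            next
              case F: False
              have "\<not> (?C \<and> rcond ?p' r)"
              proof
                assume h: "?C \<and> rcond ?p' r"
                then have "c = b" using rc' cb by blast
                then show False using h rc rc' F by auto
              qed
              then show ?thesis unfolding L R using F by auto
            qed
          qed
        qed
      qed
      moreover have "is_path Q (arrs Q) ?p'" using ig_right(2) ps path_butlast[of "fst p" "rev qs'" b a]
        by (cases p) auto
      then have "kmul Q x (delta ?p') \<in> ideal_gen Q (pinched_rels Q Q1p Ig ap am bp bm)"
        by (rule ideal_gen.ig_right[OF ig_right(1)])
      ultimately show ?thesis by (metis ideal_gen.ig_smult ideal_gen.ig_zero)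
    qed
  qed
qed

lemma kmul_zero_l: "kmul Q kzero h r = (0::'k)"
  by (simp add: kmul_def supp_def kzero_def)
lemma kmul_zero_r: "kmul Q h kzero r = (0::'k)"
  by (simp add: kmul_def supp_def kzero_def)

definition Aelt :: "('v,'a,'k) kq" where
  "Aelt = kadd (delta (v1, [\<alpha>])) (ksmult \<mu> (delta (v1, [\<beta>])))"

lemma supp_A: "supp Aelt \<subseteq> {(v1,[\<alpha>]), (v1,[\<beta>])}"
  by (auto simp: supp_def Aelt_def kadd_def ksmult_def delta_def)
lemma A_vals: "Aelt (v1,[\<alpha>]) = 1" "Aelt (v1,[\<beta>]) = \<mu>"
  using kr by (auto simp: Aelt_def kadd_def ksmult_def delta_def)

lemma kmulA_left: "kmul Q Aelt h r = (if lcond Q (v1,[\<alpha>]) r then h (lq (v1,[\<alpha>]) r) else 0)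
    + \<mu> * (if lcond Q (v1,[\<beta>]) r then h (lq (v1,[\<beta>]) r) else 0)"
  using kr by (subst kmul_left_gen[OF _ supp_A]) (simp_all add: A_vals)

lemma kmulA_right: "kmul Q h Aelt r = (if rcond (v1,[\<alpha>]) r then h (rp Q (v1,[\<alpha>]) r) else 0)
    + (if rcond (v1,[\<beta>]) r then h (rp Q (v1,[\<beta>]) r) else 0) * \<mu>"
  using kr by (subst kmul_right_gen[OF _ supp_A]) (simp_all add: A_vals)

lemma fin_J: "finite S \<Longrightarrow> supp f \<subseteq> S \<Longrightarrow> (\<forall>p\<in>supp f. delta p \<in> J) \<Longrightarrow> f \<in> J"
proof (induction S arbitrary: f rule: finite_induct)
  case empty
  then have "f = kzero" by (auto simp: supp_def kzero_def)
  then show ?case using J_zero by simp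
next
  case (insert p S)
  define f' where "f' = (\<lambda>r. if r = p then 0 else f r)"
  have s': "supp f' \<subseteq> S" "supp f' \<subseteq> supp f" using insert(4) by (auto simp: f'_def supp_def)
  have f'J: "f' \<in> J" using insert(3)[OF s'(1)] insert(5) s'(2) by blast
  show ?case
  proof (cases "f p = 0")
    case True
    then have "f = f'" by (auto simp: f'_def)
    then show ?thesis using f'J by simp
  next
    case False
    then have "p \<in> supp f" by (simp add: supp_def)
    then have "delta p \<in> J" using insert(5) by blast
    then have "kadd (ksmult (f p) (delta p)) f' \<in> J" using f'J by (simp add: J_add J_smult)
    moreover have "kadd (ksmult (f p) (delta p)) f' = f"
      by (auto simp: kadd_def ksmult_def delta_def f'_def)
    ultimately show ?thesis by simp
  qed
qed

lemma delta_comp: "composable Q p q \<Longrightarrow> kmul Q (delta p) (delta q) = (delta (pcomp p q) :: ('v,'a,'k) kq)"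
  apply (rule ext)
  apply (simp add: kmul_delta_left)
  apply (auto simp: lcond_def lq_def delta_def pcomp_def composable_def)
  done

lemma card2: "finite A \<Longrightarrow> card A \<le> 2 \<Longrightarrow> a \<in> A \<Longrightarrow> b \<in> A \<Longrightarrow> x \<in> A \<Longrightarrow> a \<noteq> b \<Longrightarrow> x = a \<or> x = b"
proof (rule ccontr)
  assume h: "finite A" "card A \<le> 2" "a \<in> A" "b \<in> A" "x \<in> A" "a \<noteq> b" "\<not> (x = a \<or> x = b)"
  then have "card {a, b, x} = 3" by auto
  moreover have "card {a, b, x} \<le> card A" using h by (intro card_mono) auto
  ultimately show False using h by simp
qed

lemma into_v2: assumes "x \<in> arrs Q" "tgt Q x = v2" shows "x = \<alpha> \<or> x = \<beta>"
proof -
  have xg: "x \<in> Q1g"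
  proof (rule ccontr)
    assume "x \<notin> Q1g"
    then have "x \<in> Q1p" using assms un by blast
    then show False using pin2 kr_pin assms by force
  qed
  have "card {a \<in> Q1g. tgt Q a = v2} \<le> 2" using gent kr arr_verts[of \<alpha>] Q1g_arrs unfolding gentle_def by blast
  then show ?thesis using card2[OF fin_Q1g, of "\<lambda>a. tgt Q a = v2" \<alpha> \<beta> x] kr xg assms by auto
qed

lemma from_v1: assumes "x \<in> arrs Q" "src Q x = v1" shows "x = \<alpha> \<or> x = \<beta>"
proof -
  have xg: "x \<in> Q1g"
  proof (rule ccontr)
    assume "x \<notin> Q1g"
    then have "x \<in> Q1p" using assms un by blast
    then show False using pin2 kr_pin assms by force
  qed
  have "card {a \<in> Q1g. src Q a = v1} \<le> 2" using gent kr arr_verts[of \<alpha>] Q1g_arrs unfolding gentle_def by blast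
  then show ?thesis using card2[OF fin_Q1g, of "\<lambda>a. src Q a = v1" \<alpha> \<beta> x] kr xg assms by auto
qed

lemma homD: "hom_elt Q deg i j n f \<Longrightarrow> f p \<noteq> 0 \<Longrightarrow> is_path Q (arrs Q) p \<and> fst p = i \<and> ptgt Q p = j \<and> pdeg deg p = n"
  unfolding hom_elt_def supp_def by blast

lemma arrow_chain_hd: "arrow_chain Q (x # c # t) \<Longrightarrow> src Q x = tgt Q c"
  unfolding arrow_chain_def by (erule allE[of _ 0]) simp

lemma path_to_v2:
  assumes "is_path Q (arrs Q) r" "ptgt Q r = v2" "fst r \<noteq> v1" "fst r \<noteq> v2"
  obtains x c t where "snd r = x # c # t" "x = \<alpha> \<or> x = \<beta>" "tgt Q c = v1"
proof -
  have "snd r \<noteq> []" using assms by (auto simp: ptgt_def)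
  then obtain x t' where sr: "snd r = x # t'" by (cases "snd r") auto
  have xa: "x \<in> arrs Q" "tgt Q x = v2" using assms(1,2) sr by (auto simp: is_path_def ptgt_def)
  then have x: "x = \<alpha> \<or> x = \<beta>" using into_v2 by blast
  have "t' \<noteq> []"
  proof
    assume "t' = []"
    then have "src Q x = fst r" using assms(1) sr by (simp add: is_path_def)
    then show False using x kr assms(3) by auto
  qed
  then obtain c t where t: "t' = c # t" by (cases t') auto
  have "arrow_chain Q (x # c # t)" using assms(1) sr t by (simp add: is_path_def)
  then have "src Q x = tgt Q c" by (rule arrow_chain_hd)
  then have "tgt Q c = v1" using x kr by auto
  then show ?thesis using that sr t x by blast
qed

lemma stripT_inv:
  assumes f: "hom_elt Q deg i v1 m f" and i: "i \<noteq> v1"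
  shows "stripT (kmul Q Aelt f) = f"
proof
  fix r
  show "stripT (kmul Q Aelt f) r = f r"
  proof (cases "snd r \<noteq> [] \<and> tgt Q (hd (snd r)) = v1")
    case True
    define c where "c = hd (snd r)"
    have pt: "ptgt Q r = v1" using True by (simp add: ptgt_def)
    have la: "lcond Q (v1, [\<alpha>]) (fst r, sig c # snd r) \<longleftrightarrow> sig c = \<alpha>"
      using pt by (auto simp: lcond_def lq_def)
    have lb: "lcond Q (v1, [\<beta>]) (fst r, sig c # snd r) \<longleftrightarrow> sig c = \<beta>"
      using pt by (auto simp: lcond_def lq_def)
    have lqe: "lq (v1, [x]) (fst r, sig c # snd r) = r" for x by (simp add: lq_def)
    have "stripT (kmul Q Aelt f) r = wt c * kmul Q Aelt f (fst r, sig c # snd r)"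
      using True by (simp add: stripT_def c_def)
    also have "\<dots> = f r"
      using sig_ab[of c] wt_sig[of c] la lb lqe kr mu by (auto simp: kmulA_left)
    finally show ?thesis .
  next
    case False
    have "f r = 0"
    proof (rule ccontr)
      assume "f r \<noteq> 0"
      then have "is_path Q (arrs Q) r" "fst r = i" "ptgt Q r = v1" using homD[OF f] by auto
      then show False using False i by (auto simp: ptgt_def split: if_splits)
    qed
    then show ?thesis using False by (auto simp: stripT_def)
  qed
qed

lemma stripT_hom:
  assumes f: "hom_elt Q deg i v2 (m + deg \<alpha>) f"
  shows "hom_elt Q deg i v1 m (stripT f)"
proof -
  have sub: "supp (stripT f) \<subseteq> (\<lambda>r. (fst r, tl (snd r))) ` supp f"
  proof
    fix r assume "r \<in> supp (stripT f)"
    then have h: "snd r \<noteq> []" "f (fst r, sig (hd (snd r)) # snd r) \<noteq> 0"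
      by (auto simp: supp_def stripT_def split: if_splits)
    then show "r \<in> (\<lambda>r. (fst r, tl (snd r))) ` supp f"
      by (intro image_eqI[of _ _ "(fst r, sig (hd (snd r)) # snd r)"]) (auto simp: supp_def)
  qed
  have "finite (supp (stripT f))" using f sub by (auto simp: hom_elt_def intro: finite_subset)
  moreover have "is_path Q (arrs Q) r \<and> fst r = i \<and> ptgt Q r = v1 \<and> pdeg deg r = m" if r: "r \<in> supp (stripT f)" for r
  proof -
    have h: "snd r \<noteq> []" "tgt Q (hd (snd r)) = v1" "f (fst r, sig (hd (snd r)) # snd r) \<noteq> 0"
      using r by (auto simp: supp_def stripT_def split: if_splits)
    let ?r0 = "(fst r, sig (hd (snd r)) # snd r)"
    have r0: "is_path Q (arrs Q) ?r0" "fst ?r0 = i" "pdeg deg ?r0 = m + deg \<alpha>"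
      using homD[OF f h(3)] by auto
    have "is_path Q (arrs Q) r" using path_tl[OF r0(1)] by simp
    moreover have "pdeg deg r = m" using r0(3) sig_ab[of "hd (snd r)"] kr by (auto simp: pdeg_def)
    ultimately show ?thesis using r0(2) h by (simp add: ptgt_def)
  qed
  ultimately show ?thesis by (simp add: hom_elt_def)
qed

lemma stripT_surj:
  assumes f: "hom_elt Q deg i v2 d f" and i: "i \<noteq> v1" "i \<noteq> v2"
  shows "ksub (kmul Q Aelt (stripT f)) f \<in> J"
proof -
  let ?E = "ksub (kmul Q Aelt (stripT f)) f"
  let ?S = "supp f \<union> (\<lambda>r. (fst r, \<alpha> # tl (snd r))) ` supp f \<union> (\<lambda>r. (fst r, \<beta> # tl (snd r))) ` supp f"
  have finf: "finite (supp f)" using f by (simp add: hom_elt_def)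
  have lqx: "lq (v1, [x]) r = (fst r, tl (snd r))" for x r by (simp add: lq_def drop_Suc)
  have lcx: "lcond Q (v1, [x]) r \<Longrightarrow> snd r = x # tl (snd r) \<and> ptgt Q (fst r, tl (snd r)) = v1" for x r
    by (auto simp: lcond_def lqx)
  have lcu: "lcond Q (v1, [\<alpha>]) r \<Longrightarrow> \<not> lcond Q (v1, [\<beta>]) r" for r
  proof
    assume "lcond Q (v1, [\<alpha>]) r" "lcond Q (v1, [\<beta>]) r"
    then have "snd r = \<alpha> # tl (snd r)" "snd r = \<beta> # tl (snd r)" using lcx by blast+
    then show False using kr by (metis list.inject)
  qed
  have struct: "\<exists>x c t. snd r = x # c # t \<and> (x = \<alpha> \<or> x = \<beta>) \<and> tgt Q c = v1 \<and> is_path Q (arrs Q) (fst r, c # t)"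
    if r: "?E r \<noteq> 0" for r
  proof (cases "f r = 0")
    case False
    then have rp: "is_path Q (arrs Q) r" "fst r = i" "ptgt Q r = v2" using homD[OF f] by auto
    obtain x c t where "snd r = x # c # t" "x = \<alpha> \<or> x = \<beta>" "tgt Q c = v1"
      using path_to_v2[OF rp(1,3)] rp(2) i by metis
    moreover have "is_path Q (arrs Q) (fst r, c # t)" using path_tl[of "arrs Q" "fst r" x "c # t"] rp(1) calculation(1)
      by (cases r) auto
    ultimately show ?thesis by blast
  next
    case True
    then have "kmul Q Aelt (stripT f) r \<noteq> 0" using r by (simp add: ksub_def)
    then obtain x where x: "x = \<alpha> \<or> x = \<beta>" "lcond Q (v1, [x]) r" "stripT f (fst r, tl (snd r)) \<noteq> 0"
      using lcu[of r] by (auto simp: kmulA_left lqx split: if_splits)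
    have sr: "snd r = x # tl (snd r)" using lcx[OF x(2)] by simp
    let ?q = "(fst r, tl (snd r))"
    have h: "snd ?q \<noteq> []" "tgt Q (hd (snd ?q)) = v1" "f (fst r, sig (hd (snd ?q)) # snd ?q) \<noteq> 0"
      using x(3) by (auto simp: stripT_def split: if_splits)
    then obtain c t where ct: "tl (snd r) = c # t" by (cases "tl (snd r)") auto
    have "is_path Q (arrs Q) (fst r, sig c # c # t)" using homD[OF f h(3)] ct by auto
    then have "is_path Q (arrs Q) (fst r, c # t)" by (rule path_tl)
    then show ?thesis using sr ct x(1) h(2) by auto
  qed
  have "supp ?E \<subseteq> ?S"
  proof
    fix r assume r: "r \<in> supp ?E"
    show "r \<in> ?S"
    proof (cases "f r = 0")
      case False then show ?thesis by (simp add: supp_def)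
    next
      case True
      then have "kmul Q Aelt (stripT f) r \<noteq> 0" using r by (simp add: ksub_def supp_def)
      then obtain x where x: "x = \<alpha> \<or> x = \<beta>" "lcond Q (v1, [x]) r" "stripT f (fst r, tl (snd r)) \<noteq> 0"
        using lcu[of r] by (auto simp: kmulA_left lqx split: if_splits)
      have sr: "snd r = x # tl (snd r)" using lcx[OF x(2)] by simp
      let ?r0 = "(fst r, sig (hd (tl (snd r))) # tl (snd r))"
      have "f ?r0 \<noteq> 0" using x(3) by (auto simp: stripT_def split: if_splits)
      then have "?r0 \<in> supp f" by (simp add: supp_def)
      moreover have "r = (fst ?r0, x # tl (snd ?r0))" using sr by (cases r) auto
      ultimately show ?thesis using x(1) by blast
    qed
  qed
  moreover have "finite ?S" using finf by simp
  moreover have "\<forall>r\<in>supp ?E. delta r \<in> J"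
  proof
    fix r assume r: "r \<in> supp ?E"
    then have E0: "?E r \<noteq> 0" by (simp add: supp_def)
    obtain x c t where xct: "snd r = x # c # t" "x = \<alpha> \<or> x = \<beta>" "tgt Q c = v1" "is_path Q (arrs Q) (fst r, c # t)"
      using struct[OF E0] by blast
    have cA: "c \<in> arrs Q" using xct(4) by (simp add: is_path_def)
    have lc: "lcond Q (v1, [y]) r \<longleftrightarrow> y = x" for y
      using xct(1,3) by (auto simp: lcond_def lq_def ptgt_def)
    have lqr: "lq (v1, [y]) r = (fst r, c # t)" for y using xct(1) by (simp add: lq_def)
    have hv: "stripT f (fst r, c # t) = wt c * f (fst r, sig c # c # t)" using xct(3) by (simp add: stripT_def)
    have fr: "f r = f (fst r, x # c # t)" using xct(1) by (cases r) auto
    have Ig: "(src Q c, [x, c]) \<in> Ig"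
    proof (rule ccontr)
      assume nI: "(src Q c, [x, c]) \<notin> Ig"
      have "x = sig c"
      proof (cases "x = \<alpha>")
        case True then show ?thesis using nI by (simp add: sig_def)
      next
        case False
        then have "x = \<beta>" using xct(2) by simp
        then have "(src Q c, [\<alpha>, c]) \<in> Ig" using nI gentleT(2)[OF into_v1_g[OF cA xct(3)] xct(3)] by auto
        then show ?thesis using \<open>x = \<beta>\<close> by (simp add: sig_def)
      qed
      then have sx: "sig c = x" by simp
      have K: "kmul Q Aelt (stripT f) r = (if x = \<alpha> then 1 else \<mu>) * (wt c * f (fst r, x # c # t))"
      proof (cases "x = \<alpha>")
        case True
        then have "lcond Q (v1, [\<alpha>]) r" "\<not> lcond Q (v1, [\<beta>]) r" using lc kr by auto
        then show ?thesis using True lqr hv sx by (simp add: kmulA_left)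
      next
        case False
        then have "x = \<beta>" using xct(2) by simp
        then have "\<not> lcond Q (v1, [\<alpha>]) r" "lcond Q (v1, [\<beta>]) r" using lc kr by auto
        then show ?thesis using False lqr hv sx by (simp add: kmulA_left)
      qed
      have "(if x = \<alpha> then 1 else \<mu>) * wt c = 1"
        using wt_sig[OF sx] xct(2) kr mu by auto
      then have "kmul Q Aelt (stripT f) r = f r" using K fr by (simp add: mult.assoc[symmetric])
      then have "?E r = 0" by (simp add: ksub_def)
      then show False using E0 by simp
    qed
    have "delta (src Q c, [x, c]) \<in> J" using Ig by (intro J_gen) (simp add: pinched_rels_def)
    moreover have pt: "is_path Q (arrs Q) (fst r, t)" using path_tl[OF xct(4)] .
    ultimately have "kmul Q (delta (src Q c, [x, c])) (delta (fst r, t)) \<in> J" by (rule J_right)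
    moreover have "composable Q (src Q c, [x, c]) (fst r, t)"
    proof (cases t)
      case Nil then show ?thesis using xct(4) by (simp add: composable_def ptgt_def is_path_def)
    next
      case (Cons d t')
      have "arrow_chain Q (c # d # t')" using xct(4) Cons by (simp add: is_path_def)
      then have "src Q c = tgt Q d" by (rule arrow_chain_hd)
      then show ?thesis using Cons by (simp add: composable_def ptgt_def)
    qed
    then have "kmul Q (delta (src Q c, [x, c])) (delta (fst r, t)) = (delta (fst r, [x, c] @ t) :: ('v,'a,'k) kq)"
      by (simp add: delta_comp pcomp_def)
    moreover have "r = (fst r, [x, c] @ t)" using xct(1) by (cases r) simp
    ultimately show "delta r \<in> J" by metis
  qed
  ultimately show ?thesis by (intro fin_J)
qed

lemma arrow_chain_mid: "arrow_chain Q (t @ [a, b] @ u) \<Longrightarrow> src Q a = tgt Q b"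
  unfolding arrow_chain_def by (erule allE[of _ "length t"]) (simp add: nth_append)

lemma path_from_v1:
  assumes "is_path Q (arrs Q) r" "fst r = v1" "ptgt Q r \<noteq> v1" "ptgt Q r \<noteq> v2"
  obtains t c x where "snd r = t @ [c, x]" "x = \<alpha> \<or> x = \<beta>" "src Q c = v2"
proof -
  have "snd r \<noteq> []" using assms by (auto simp: ptgt_def)
  then obtain x t' where sr: "snd r = t' @ [x]" by (cases "snd r" rule: rev_cases) auto
  have xa: "x \<in> arrs Q" "src Q x = v1" using assms(1,2) sr by (auto simp: is_path_def)
  then have x: "x = \<alpha> \<or> x = \<beta>" using from_v1 by blast
  have "t' \<noteq> []"
  proof
    assume "t' = []"
    then have "ptgt Q r = tgt Q x" using sr by (simp add: ptgt_def)
    then show False using x kr assms(4) by auto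
  qed
  then obtain c t where t: "t' = t @ [c]" by (cases t' rule: rev_cases) auto
  have "arrow_chain Q (t @ [c, x] @ [])" using assms(1) sr t by (simp add: is_path_def)
  then have "src Q c = tgt Q x" by (rule arrow_chain_mid)
  then have "src Q c = v2" using x kr by auto
  then show ?thesis using that sr t x by simp
qed

lemma path_prefix:
  assumes "is_path Q (arrs Q) (w, t @ [c, y])"
  shows "is_path Q (arrs Q) (tgt Q c, t)"
proof -
  have ca: "c \<in> arrs Q" using assms by (simp add: is_path_def)
  have ch: "arrow_chain Q (t @ [c, y])" using assms by (simp add: is_path_def)
  have ch1: "arrow_chain Q t" using arrow_chain_app[of t "[c, y]"] ch by simp
  have "t \<noteq> [] \<Longrightarrow> src Q (last t) = tgt Q c"
  proof -
    assume "t \<noteq> []"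
    then have "t = butlast t @ [last t]" by simp
    then have "arrow_chain Q (butlast t @ [last t, c] @ [y])" using ch by (metis append.assoc append_Cons append_Nil)
    then show ?thesis by (rule arrow_chain_mid)
  qed
  then show ?thesis using assms ca ch1 arr_verts[of c] by (auto simp: is_path_def)
qed

lemma path_butlast1:
  assumes "is_path Q (arrs Q) (w, l @ [x])" "l \<noteq> []"
  shows "is_path Q (arrs Q) (src Q (last l), l)"
proof -
  have "last l \<in> set l" using assms(2) by simp
  then have la: "last l \<in> arrs Q" using assms(1) by (auto simp: is_path_def)
  have "arrow_chain Q l" using assms(1) arrow_chain_app[of l "[x]"] by (simp add: is_path_def)
  then show ?thesis using assms la arr_verts[of "last l"] by (auto simp: is_path_def)
qed

lemma stripB_inv:
  assumes f: "hom_elt Q deg v2 i m f" and i: "i \<noteq> v2"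
  shows "stripB (kmul Q f Aelt) = f"
proof
  fix r
  show "stripB (kmul Q f Aelt) r = f r"
  proof (cases "snd r \<noteq> [] \<and> fst r = v2 \<and> src Q (last (snd r)) = v2")
    case True
    define c where "c = last (snd r)"
    have ra: "rcond (v1, [\<alpha>]) (v1, snd r @ [sigB c]) \<longleftrightarrow> sigB c = \<alpha>"
      by (auto simp: rcond_def)
    have rb: "rcond (v1, [\<beta>]) (v1, snd r @ [sigB c]) \<longleftrightarrow> sigB c = \<beta>"
      by (auto simp: rcond_def)
    have rpe: "rp Q (v1, [x]) (v1, snd r @ [sigB c]) = r" if "x = \<alpha> \<or> x = \<beta>" for x
      using that True kr by (cases r) (auto simp: rp_def ptgt_def)
    have "stripB (kmul Q f Aelt) r = wtB c * kmul Q f Aelt (v1, snd r @ [sigB c])"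
      using True by (simp add: stripB_def c_def)
    also have "\<dots> = f r"
    proof (cases "sigB c = \<alpha>")
      case True
      then have "rcond (v1, [\<alpha>]) (v1, snd r @ [sigB c])" "\<not> rcond (v1, [\<beta>]) (v1, snd r @ [sigB c])"
        using ra rb kr by auto
      then show ?thesis using rpe[of \<alpha>] wtB_sig[OF True] kr by (simp add: kmulA_right)
    next
      case False
      then have sb: "sigB c = \<beta>" using sigB_ab[of c] by simp
      then have "\<not> rcond (v1, [\<alpha>]) (v1, snd r @ [sigB c])" "rcond (v1, [\<beta>]) (v1, snd r @ [sigB c])"
        using ra rb kr by auto
      then show ?thesis using rpe[of \<beta>] wtB_sig[OF sb] kr mu by (simp add: kmulA_right)
    qed
    finally show ?thesis .
  next
    case False
    have "f r = 0"
    proof (rule ccontr)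
      assume "f r \<noteq> 0"
      then have "is_path Q (arrs Q) r" "fst r = v2" "ptgt Q r = i" using homD[OF f] by auto
      then show False using False i by (auto simp: ptgt_def is_path_def split: if_splits)
    qed
    then show ?thesis using False by (auto simp: stripB_def)
  qed
qed

lemma stripB_hom:
  assumes f: "hom_elt Q deg v1 i (m + deg \<alpha>) f"
  shows "hom_elt Q deg v2 i m (stripB f)"
proof -
  have sub: "supp (stripB f) \<subseteq> (\<lambda>r. (v2, butlast (snd r))) ` supp f"
  proof
    fix r assume "r \<in> supp (stripB f)"
    then have h: "snd r \<noteq> []" "fst r = v2" "f (v1, snd r @ [sigB (last (snd r))]) \<noteq> 0"
      by (auto simp: supp_def stripB_def split: if_splits)
    then show "r \<in> (\<lambda>r. (v2, butlast (snd r))) ` supp f"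
      by (intro image_eqI[of _ _ "(v1, snd r @ [sigB (last (snd r))])"]) (auto simp: supp_def intro: prod_eqI)
  qed
  have "finite (supp (stripB f))" using f sub by (auto simp: hom_elt_def intro: finite_subset)
  moreover have "is_path Q (arrs Q) r \<and> fst r = v2 \<and> ptgt Q r = i \<and> pdeg deg r = m" if r: "r \<in> supp (stripB f)" for r
  proof -
    have h: "snd r \<noteq> []" "fst r = v2" "src Q (last (snd r)) = v2" "f (v1, snd r @ [sigB (last (snd r))]) \<noteq> 0"
      using r by (auto simp: supp_def stripB_def split: if_splits)
    let ?r0 = "(v1, snd r @ [sigB (last (snd r))])"
    have r0: "is_path Q (arrs Q) ?r0" "ptgt Q ?r0 = i" "pdeg deg ?r0 = m + deg \<alpha>"
      using homD[OF f h(4)] by auto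
    have "is_path Q (arrs Q) (src Q (last (snd r)), snd r)" using path_butlast1[OF r0(1) h(1)] .
    then have "is_path Q (arrs Q) r" using h(2,3) by (cases r) simp
    moreover have "pdeg deg r = m" using r0(3) sigB_ab[of "last (snd r)"] kr by (auto simp: pdeg_def)
    moreover have "ptgt Q r = i" using r0(2) h(1) by (simp add: ptgt_def)
    ultimately show ?thesis using h(2) by simp
  qed
  ultimately show ?thesis by (simp add: hom_elt_def)
qed

lemma stripB_surj:
  assumes f: "hom_elt Q deg v1 i d f" and i: "i \<noteq> v1" "i \<noteq> v2"
  shows "ksub (kmul Q (stripB f) Aelt) f \<in> J"
proof -
  let ?E = "ksub (kmul Q (stripB f) Aelt) f"
  let ?S = "supp f \<union> (\<lambda>r. (fst r, butlast (snd r) @ [\<alpha>])) ` supp f \<union> (\<lambda>r. (fst r, butlast (snd r) @ [\<beta>])) ` supp f"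
  have finf: "finite (supp f)" using f by (simp add: hom_elt_def)
  have rpx: "rp Q (v1, [x]) r = (v2, butlast (snd r))" if "x = \<alpha> \<or> x = \<beta>" for x r
  proof -
    have tb: "take (length l - Suc 0) l = butlast l" for l :: "'a list"
      by (metis One_nat_def butlast_conv_take)
    show ?thesis using that kr by (auto simp: rp_def ptgt_def tb)
  qed
  have rcx: "rcond (v1, [x]) r \<Longrightarrow> fst r = v1 \<and> snd r \<noteq> [] \<and> last (snd r) = x" for x r
  proof -
    assume h: "rcond (v1, [x]) r"
    then have a: "fst r = v1" "snd r \<noteq> []" "drop (length (snd r) - 1) (snd r) = [x]"
      by (auto simp: rcond_def)
    have "length (snd r) - 1 < length (snd r)" using a(2) by simp
    then have "last (snd r) = last (drop (length (snd r) - 1) (snd r))" by simp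
    then have "last (snd r) = x" using a(3) by simp
    then show ?thesis using a(1,2) by simp
  qed
  have rcu: "rcond (v1, [\<alpha>]) r \<Longrightarrow> \<not> rcond (v1, [\<beta>]) r" for r
  proof
    assume a1: "rcond (v1, [\<alpha>]) r" and a2: "rcond (v1, [\<beta>]) r"
    have "last (snd r) = \<alpha>" using rcx[OF a1] by simp
    moreover have "last (snd r) = \<beta>" using rcx[OF a2] by simp
    ultimately show False using kr by simp
  qed
  have snoc2: "snd r = t @ [c, x]" if "snd r \<noteq> []" "last (snd r) = x" "butlast (snd r) = t @ [c]" for r t c x
  proof -
    have "snd r = butlast (snd r) @ [last (snd r)]" using that(1) by simp
    also have "\<dots> = t @ [c, x]" using that(2,3) by simp
    finally show ?thesis .
  qed
  have struct: "\<exists>t c x. fst r = v1 \<and> snd r = t @ [c, x] \<and> (x = \<alpha> \<or> x = \<beta>) \<and> src Q c = v2 \<and> is_path Q (arrs Q) (tgt Q c, t)"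
    if r: "?E r \<noteq> 0" for r
  proof (cases "f r = 0")
    case False
    then have rp: "is_path Q (arrs Q) r" "fst r = v1" "ptgt Q r = i" using homD[OF f] by auto
    obtain t c x where "snd r = t @ [c, x]" "x = \<alpha> \<or> x = \<beta>" "src Q c = v2"
      using path_from_v1[OF rp(1,2)] rp(3) i by metis
    moreover have "is_path Q (arrs Q) (tgt Q c, t)" using path_prefix[of "fst r" t c x] rp(1) calculation(1)
      by (cases r) auto
    ultimately show ?thesis using rp(2) by blast
  next
    case True
    then have "kmul Q (stripB f) Aelt r \<noteq> 0" using r by (simp add: ksub_def)
    then obtain x where x: "x = \<alpha> \<or> x = \<beta>" "rcond (v1, [x]) r" "stripB f (v2, butlast (snd r)) \<noteq> 0"
      using rcu[of r] rpx by (auto simp: kmulA_right split: if_splits)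
    have sr: "fst r = v1" "snd r \<noteq> []" "last (snd r) = x" using rcx[OF x(2)] by simp_all
    let ?q = "(v2, butlast (snd r))"
    have h: "snd ?q \<noteq> []" "src Q (last (snd ?q)) = v2" "f (v1, snd ?q @ [sigB (last (snd ?q))]) \<noteq> 0"
      using x(3) by (auto simp: stripB_def split: if_splits)
    then obtain c t where ct: "butlast (snd r) = t @ [c]" by (cases "butlast (snd r)" rule: rev_cases) auto
    have "is_path Q (arrs Q) (v1, t @ [c, sigB c])" using homD[OF f h(3)] ct by auto
    then have "is_path Q (arrs Q) (tgt Q c, t)" by (rule path_prefix)
    moreover have "snd r = t @ [c, x]" using snoc2[OF sr(2,3) ct] .
    ultimately show ?thesis using sr(1) x(1) h(2) ct by auto
  qed
  have "supp ?E \<subseteq> ?S"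
  proof
    fix r assume r: "r \<in> supp ?E"
    show "r \<in> ?S"
    proof (cases "f r = 0")
      case False then show ?thesis by (simp add: supp_def)
    next
      case True
      then have "kmul Q (stripB f) Aelt r \<noteq> 0" using r by (simp add: ksub_def supp_def)
      then obtain x where x: "x = \<alpha> \<or> x = \<beta>" "rcond (v1, [x]) r" "stripB f (v2, butlast (snd r)) \<noteq> 0"
        using rcu[of r] rpx by (auto simp: kmulA_right split: if_splits)
      have sr: "fst r = v1" "snd r \<noteq> []" "last (snd r) = x" using rcx[OF x(2)] by simp_all
      let ?r0 = "(v1, butlast (snd r) @ [sigB (last (butlast (snd r)))])"
      have "f ?r0 \<noteq> 0" using x(3) by (auto simp: stripB_def split: if_splits)
      then have "?r0 \<in> supp f" by (simp add: supp_def)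
      moreover have "r = (fst ?r0, butlast (snd ?r0) @ [x])"
      proof -
        have e: "butlast (snd r) @ [last (snd r)] = snd r" using sr(2) by simp
        show ?thesis using sr(1,3) e by (cases r) auto
      qed
      ultimately show ?thesis using x(1) by blast
    qed
  qed
  moreover have "finite ?S" using finf by simp
  moreover have "\<forall>r\<in>supp ?E. delta r \<in> J"
  proof
    fix r assume r: "r \<in> supp ?E"
    then have E0: "?E r \<noteq> 0" by (simp add: supp_def)
    obtain t c x where tcx: "fst r = v1" "snd r = t @ [c, x]" "x = \<alpha> \<or> x = \<beta>" "src Q c = v2" "is_path Q (arrs Q) (tgt Q c, t)"
      using struct[OF E0] by blast
    have r_eq: "r = (v1, t @ [c, x])" using tcx(1,2) by (cases r) simp
    have cA: "c \<in> arrs Q"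
    proof (cases "f r = 0")
      case False
      then show ?thesis using homD[OF f False] tcx(2) by (auto simp: is_path_def)
    next
      case True
      then have "kmul Q (stripB f) Aelt r \<noteq> 0" using E0 by (simp add: ksub_def)
      then obtain y where y: "y = \<alpha> \<or> y = \<beta>" "stripB f (v2, butlast (snd r)) \<noteq> 0"
        using rpx rcu[of r] by (auto simp: kmulA_right split: if_splits)
      then have fnz: "f (v1, t @ [c, sigB c]) \<noteq> 0" using tcx(2,4) by (auto simp: stripB_def butlast_append split: if_splits)
      then show ?thesis using homD[OF f fnz] by (auto simp: is_path_def)
    qed
    have rc: "rcond (v1, [y]) r \<longleftrightarrow> y = x" for y
      using tcx(1,2) by (auto simp: rcond_def)
    have rpr: "rp Q (v1, [y]) r = (v2, t @ [c])" if "y = \<alpha> \<or> y = \<beta>" for y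
      using rpx[OF that, of r] tcx(2) by (simp add: butlast_append)
    have hv: "stripB f (v2, t @ [c]) = wtB c * f (v1, t @ [c, sigB c])" using tcx(4) by (simp add: stripB_def)
    have Ig: "(v1, [c, x]) \<in> Ig"
    proof (rule ccontr)
      assume nI: "(v1, [c, x]) \<notin> Ig"
      have sx: "sigB c = x"
      proof (cases "x = \<alpha>")
        case True then show ?thesis using nI by (simp add: sigB_def)
      next
        case False
        then have "x = \<beta>" using tcx(3) by simp
        then have "(v1, [c, \<alpha>]) \<in> Ig" using nI gentleB(2)[OF from_v2_g[OF cA tcx(4)] tcx(4)] by auto
        then show ?thesis using \<open>x = \<beta>\<close> by (simp add: sigB_def)
      qed
      have K: "kmul Q (stripB f) Aelt r = (wtB c * f (v1, t @ [c, x])) * (if x = \<alpha> then 1 else \<mu>)"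
      proof (cases "x = \<alpha>")
        case True
        then have "rcond (v1, [\<alpha>]) r" "\<not> rcond (v1, [\<beta>]) r" using rc kr by auto
        then show ?thesis using True rpr hv sx by (simp add: kmulA_right)
      next
        case False
        then have "x = \<beta>" using tcx(3) by simp
        then have "\<not> rcond (v1, [\<alpha>]) r" "rcond (v1, [\<beta>]) r" using rc kr by auto
        then show ?thesis using False rpr hv sx by (simp add: kmulA_right)
      qed
      have "wtB c * (if x = \<alpha> then 1 else \<mu>) = 1"
        using wtB_sig[OF sx] tcx(3) kr mu by auto
      then have "kmul Q (stripB f) Aelt r = f r" using K r_eq by (metis mult.commute mult.left_commute mult_1_right)
      then have "?E r = 0" by (simp add: ksub_def)
      then show False using E0 by simp
    qed
    have "delta (v1, [c, x]) \<in> J" using Ig by (intro J_gen) (simp add: pinched_rels_def)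
    then have "kmul Q (delta (tgt Q c, t)) (delta (v1, [c, x])) \<in> J" using tcx(5) by (rule J_left)
    moreover have "composable Q (tgt Q c, t) (v1, [c, x])" by (simp add: composable_def ptgt_def)
    then have "kmul Q (delta (tgt Q c, t)) (delta (v1, [c, x])) = (delta (v1, t @ [c, x]) :: ('v,'a,'k) kq)"
      by (simp add: delta_comp pcomp_def)
    ultimately show "delta r \<in> J" using r_eq by metis
  qed
  ultimately show ?thesis by (intro fin_J)
qed

lemma hom_kzero: "hom_elt Q deg a b m (kzero :: ('v,'a,'k) kq)"
  by (simp add: hom_elt_def supp_def kzero_def)

lemma hom_smult: "hom_elt Q deg a b m f \<Longrightarrow> hom_elt Q deg a b m (ksmult c f)"
  unfolding hom_elt_def supp_def ksmult_def
  by (auto intro: finite_subset[of _ "{p. f p \<noteq> 0}"])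

lemma ksub_kzero: "ksub h kzero = (h :: ('v,'a,'k) kq)" by (simp add: ksub_def kzero_def)

lemma sq_sign: "((-1::'k) ^ k) * ((-1) ^ k) = 1" by (induction k) auto

lemma J_neg: "x \<in> J \<Longrightarrow> ksub kzero x \<in> J"
proof -
  assume "x \<in> J"
  then have "ksmult (-1) x \<in> J" by (rule J_smult)
  moreover have "ksmult (-1) x = ksub kzero x" by (auto simp: ksmult_def ksub_def kzero_def)
  ultimately show ?thesis by simp
qed

lemma dir1:
  assumes i: "i \<in> verts Q" "i \<noteq> v1" "i \<noteq> v2"
  shows "hom_acyclic Q deg J (Pobj i) (Bobj deg \<alpha> \<beta> \<mu> v1 v2)"
  unfolding hom_acyclic_def
proof (intro allI impI, elim conjE)
  fix n f
  let ?X = "Pobj i :: ('v,'a,'k) twc" and ?Y = "Bobj deg \<alpha> \<beta> \<mu> v1 v2"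
  assume mor: "is_mor Q deg n ?X ?Y f" and cyc: "mor_eq J ?X ?Y (dmor Q n ?X ?Y f) (\<lambda>_ _. kzero)"
  have Bd: "snd ?Y = (\<lambda>k l. if k = 0 \<and> l = 1 then Aelt else kzero)" unfolding Bobj_def Aelt_def by simp
  have Bf: "fst ?Y = [(v2, deg \<alpha>), (v1, 1)]" by (simp add: Bobj_def)
  have Pf: "fst ?X = [(i, 0)]" and Pd: "snd ?X = (\<lambda>_ _. kzero)" by (simp_all add: Pobj_def)
  have f00: "hom_elt Q deg i v2 (n + deg \<alpha>) (f 0 0)"
    using mor unfolding is_mor_def Bf Pf by (metis (no_types) One_nat_def diff_zero fst_conv length_Cons list.size(3) nth_Cons_0 snd_conv zero_less_Suc)
  have f10: "hom_elt Q deg i v1 (n + 1) (f 1 0)"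
    using mor unfolding is_mor_def Bf Pf by (drule_tac spec[of _ 1]) simp
  have dm0: "dmor Q m ?X ?Y g 0 0 = kmul Q Aelt (g 1 0)" for m g
    by (rule ext) (simp add: dmor_def Bd Bf Pf Pd numeral_2_eq_2 kmul_zero_l kmul_zero_r)
  have dm1: "dmor Q m ?X ?Y g 1 0 = (\<lambda>r. 0)" for m g
    by (rule ext) (simp add: dmor_def Bd Bf Pf Pd numeral_2_eq_2 kmul_zero_l kmul_zero_r)
  have "ksub (dmor Q n ?X ?Y f 0 0) kzero \<in> J" using cyc unfolding mor_eq_def by (simp add: Bf Pf)
  then have kA: "kmul Q Aelt (f 1 0) \<in> J" by (simp add: dm0 ksub_kzero)
  have f10J: "f 1 0 \<in> J" using stripT_J[OF kA] stripT_inv[OF f10 i(2)] by simp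
  define g where "g = (\<lambda>k l::nat. if k = (1::nat) then stripT (f 0 0) else kzero)"
  have "is_mor Q deg (n - 1) ?X ?Y g"
    unfolding is_mor_def
  proof (intro allI impI)
    fix k l assume k: "k < length (fst ?Y)" and l: "l < length (fst ?X)"
    then have "l = 0" "k = 0 \<or> k = 1" by (auto simp: Bf Pf)
    then show "hom_elt Q deg (fst (fst ?X ! l)) (fst (fst ?Y ! k)) (n - 1 - snd (fst ?X ! l) + snd (fst ?Y ! k)) (g k l)"
    proof (elim disjE)
      assume "l = 0" "k = 0" then show ?thesis by (simp add: g_def Bf Pf hom_kzero)
    next
      assume "l = 0" "k = 1" then show ?thesis using stripT_hom[OF f00] by (simp add: g_def Bf Pf)
    qed
  qed
  moreover have "mor_eq J ?X ?Y (dmor Q (n - 1) ?X ?Y g) f"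
    unfolding mor_eq_def
  proof (intro allI impI)
    fix k l assume k: "k < length (fst ?Y)" and l: "l < length (fst ?X)"
    then have "l = 0" "k = 0 \<or> k = 1" by (auto simp: Bf Pf)
    then show "ksub (dmor Q (n - 1) ?X ?Y g k l) (f k l) \<in> J"
    proof (elim disjE)
      assume "l = 0" "k = 0"
      then show ?thesis using stripT_surj[OF f00 i(2,3)] by (simp add: dm0 g_def)
    next
      assume "l = 0" "k = 1"
      then show ?thesis using J_neg[OF f10J] dm1[of "n - 1" g] by (simp add: kzero_def)
    qed
  qed
  ultimately show "\<exists>g. is_mor Q deg (n - 1) ?X ?Y g \<and> mor_eq J ?X ?Y (dmor Q (n - 1) ?X ?Y g) f" by blast
qed

lemma kmul_smult_A: "kmul Q (ksmult c h) Aelt r = c * kmul Q h Aelt r"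
  by (simp add: kmulA_right ksmult_def algebra_simps)

lemma dir2:
  assumes i: "i \<in> verts Q" "i \<noteq> v1" "i \<noteq> v2"
  shows "hom_acyclic Q deg J (Bobj deg \<alpha> \<beta> \<mu> v1 v2) (Pobj i)"
  unfolding hom_acyclic_def
proof (intro allI impI, elim conjE)
  fix n f
  let ?X = "Bobj deg \<alpha> \<beta> \<mu> v1 v2" and ?Y = "Pobj i :: ('v,'a,'k) twc"
  assume mor: "is_mor Q deg n ?X ?Y f" and cyc: "mor_eq J ?X ?Y (dmor Q n ?X ?Y f) (\<lambda>_ _. kzero)"
  have Bd: "snd ?X = (\<lambda>k l. if k = 0 \<and> l = 1 then Aelt else kzero)" unfolding Bobj_def Aelt_def by simp
  have Bf: "fst ?X = [(v2, deg \<alpha>), (v1, 1)]" by (simp add: Bobj_def)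
  have Pf: "fst ?Y = [(i, 0)]" and Pd: "snd ?Y = (\<lambda>_ _. kzero)" by (simp_all add: Pobj_def)
  have A: "\<And>l. l < 2 \<Longrightarrow> hom_elt Q deg (fst ([(v2, deg \<alpha>), (v1, 1)] ! l)) i (n - snd ([(v2, deg \<alpha>), (v1, 1::int)] ! l)) (f 0 l)"
    using mor unfolding is_mor_def Bf Pf by simp
  have f00: "hom_elt Q deg v2 i (n - deg \<alpha>) (f 0 0)" using A[of 0] by simp
  have f01: "hom_elt Q deg v1 i (n - 1) (f 0 1)" using A[of 1] by simp
  have dm0: "dmor Q m ?X ?Y g 0 0 = (\<lambda>r. 0)" for m g
    by (rule ext) (simp add: dmor_def Bd Bf Pf Pd numeral_2_eq_2 kmul_zero_l kmul_zero_r)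
  have dm1: "dmor Q m ?X ?Y g 0 1 = (\<lambda>r. 0 - (-1) ^ nat \<bar>m\<bar> * kmul Q (g 0 0) Aelt r)" for m g
    by (rule ext) (simp add: dmor_def Bd Bf Pf Pd numeral_2_eq_2 kmul_zero_l kmul_zero_r)
  have C: "\<And>l. l < 2 \<Longrightarrow> ksub (dmor Q n ?X ?Y f 0 l) kzero \<in> J" using cyc unfolding mor_eq_def Bf Pf by simp
  have "ksub (dmor Q n ?X ?Y f 0 1) kzero \<in> J" using C[of 1] by simp
  then have "(\<lambda>r. 0 - (-1) ^ nat \<bar>n\<bar> * kmul Q (f 0 0) Aelt r) \<in> J" using dm1[of n f] by (simp add: ksub_kzero)
  then have "ksmult (- ((-1) ^ nat \<bar>n\<bar>)) (\<lambda>r. 0 - (-1) ^ nat \<bar>n\<bar> * kmul Q (f 0 0) Aelt r) \<in> J"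
    by (rule J_smult)
  moreover have "ksmult (- ((-1) ^ nat \<bar>n\<bar>)) (\<lambda>r. 0 - (-1) ^ nat \<bar>n\<bar> * kmul Q (f 0 0) Aelt r) = kmul Q (f 0 0) Aelt"
  proof
    fix r
    have "(- ((-1::'k) ^ nat \<bar>n\<bar>)) * (0 - (-1) ^ nat \<bar>n\<bar> * kmul Q (f 0 0) Aelt r)
        = ((-1) ^ nat \<bar>n\<bar> * (-1) ^ nat \<bar>n\<bar>) * kmul Q (f 0 0) Aelt r" by (simp add: algebra_simps)
    then show "ksmult (- ((-1) ^ nat \<bar>n\<bar>)) (\<lambda>r. 0 - (-1) ^ nat \<bar>n\<bar> * kmul Q (f 0 0) Aelt r) r = kmul Q (f 0 0) Aelt r"
      by (simp add: ksmult_def sq_sign)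
  qed
  ultimately have kA: "kmul Q (f 0 0) Aelt \<in> J" by simp
  have f00J: "f 0 0 \<in> J" using stripB_J[OF kA] stripB_inv[OF f00 i(3)] by simp
  define c :: 'k where "c = - ((-1) ^ nat \<bar>n - 1\<bar>)"
  define g where "g = (\<lambda>(k::nat) (l::nat). if l = (0::nat) then ksmult c (stripB (f 0 1)) else kzero)"
  have "is_mor Q deg (n - 1) ?X ?Y g"
    unfolding is_mor_def
  proof (intro allI impI)
    fix k l assume k: "k < length (fst ?Y)" and l: "l < length (fst ?X)"
    then have "k = 0" "l = 0 \<or> l = 1" by (auto simp: Bf Pf)
    then show "hom_elt Q deg (fst (fst ?X ! l)) (fst (fst ?Y ! k)) (n - 1 - snd (fst ?X ! l) + snd (fst ?Y ! k)) (g k l)"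
    proof (elim disjE)
      assume "k = 0" "l = 0"
      have "hom_elt Q deg v1 i ((n - 1 - deg \<alpha>) + deg \<alpha>) (f 0 1)" using f01 by simp
      then have "hom_elt Q deg v2 i (n - 1 - deg \<alpha>) (stripB (f 0 1))" by (rule stripB_hom)
      then show ?thesis using \<open>k = 0\<close> \<open>l = 0\<close> by (simp add: g_def Bf Pf hom_smult)
    next
      assume "k = 0" "l = 1" then show ?thesis by (simp add: g_def Bf Pf hom_kzero)
    qed
  qed
  moreover have "mor_eq J ?X ?Y (dmor Q (n - 1) ?X ?Y g) f"
    unfolding mor_eq_def
  proof (intro allI impI)
    fix k l assume k: "k < length (fst ?Y)" and l: "l < length (fst ?X)"
    then have "k = 0" "l = 0 \<or> l = 1" by (auto simp: Bf Pf)
    then show "ksub (dmor Q (n - 1) ?X ?Y g k l) (f k l) \<in> J"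
    proof (elim disjE)
      assume "k = 0" "l = 0"
      then show ?thesis using J_neg[OF f00J] dm0[of "n - 1" g] by (simp add: kzero_def)
    next
      assume kl: "k = 0" "l = 1"
      have "ksub (dmor Q (n - 1) ?X ?Y g 0 1) (f 0 1) = ksub (kmul Q (stripB (f 0 1)) Aelt) (f 0 1)"
      proof
        fix r
        have "(0::'k) - (-1) ^ nat \<bar>n - 1\<bar> * (c * kmul Q (stripB (f 0 1)) Aelt r)
            = ((-1) ^ nat \<bar>n - 1\<bar> * (-1) ^ nat \<bar>n - 1\<bar>) * kmul Q (stripB (f 0 1)) Aelt r"
          by (simp add: c_def algebra_simps)
        then show "ksub (dmor Q (n - 1) ?X ?Y g 0 1) (f 0 1) r = ksub (kmul Q (stripB (f 0 1)) Aelt) (f 0 1) r"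
          using dm1[of "n - 1" g] by (simp add: ksub_def g_def kmul_smult_A sq_sign)
      qed
      then show ?thesis using stripB_surj[OF f01 i(2,3)] kl by simp
    qed
  qed
  ultimately show "\<exists>g. is_mor Q deg (n - 1) ?X ?Y g \<and> mor_eq J ?X ?Y (dmor Q (n - 1) ?X ?Y g) f" by blast
qed
end

theorem lemma5p6:
  fixes Q :: "('v,'a) quiver" and Q1g Q1p :: "'a set" and Ig :: "('v,'a) path set"
    and deg :: "'a \<Rightarrow> int" and ap am bp bm :: "'a \<Rightarrow> 'a"
    and \<alpha> \<beta> :: 'a and v1 v2 i :: 'v and \<mu> :: "'k::field"
  assumes "graded_pinched_gentle Q Q1g Q1p Ig deg ap am bp bm"
    and "acyclic_graded_kronecker Q Q1g Q1p Ig deg \<alpha> \<beta> v1 v2"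
    and "\<mu> \<noteq> 0"
    and "i \<in> verts Q" and "i \<noteq> v1" and "i \<noteq> v2"
  shows "hom_acyclic Q deg (Lambda_ideal Q Q1p Ig ap am bp bm) (Pobj i) (Bobj deg \<alpha> \<beta> \<mu> v1 v2)
       \<and> hom_acyclic Q deg (Lambda_ideal Q Q1p Ig ap am bp bm) (Bobj deg \<alpha> \<beta> \<mu> v1 v2) (Pobj i)"
proof -
  interpret setting Q Q1g Q1p Ig deg ap am bp bm \<alpha> \<beta> v1 v2 \<mu>
    using assms(1-3) by unfold_locales
  show ?thesis using dir1[OF assms(4-6)] dir2[OF assms(4-6)] by simp
qed

end
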